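(* Let $\epsilon,\delta\in\{1,i\}$. Let $(M,g)$ be a surface with isothermal coordinates $(x,y)$, $g=e^{f}dv\,dw$, $v=x+\epsilon y$, $w=x-\epsilon y$, and $(N,h)$ a surface with isothermal coordinates $(R,S)$, $h=e^{F(V,W)}dV\,dW=e^F(dR^2-\delta^2dS^2)$, $V=R+\delta S$, $W=R-\delta S$, with curvature $K_N=-2F_{VW}e^{-F}$. Let $u=(R,S):M\to N$ be a nontrivial harmonic map with nonvanishing Jacobian, with $(x,y)$ specific coordinates for $u$ (i.e. $e^FV_vW_v=1=e^FV_wW_w$), and let $\Omega,\Theta$ be functions with $$R_x=2e^{-F/2}\cosh\Omega\cosh\Theta,\quad R_y=2\epsilon e^{-F/2}\sinh\Omega\sinh\Theta,\quad S_x=\tfrac{2}{\delta}e^{-F/2}\cosh\Omega\sinh\Theta,\quad S_y=\tfrac{2\epsilon}{\delta}e^{-F/2}\sinh\Omega\cosh\Theta.$$ Then the equation $$2\Theta_{vw}=e^{-F}\Big((F_V^2-F_{VV})e^{2\Theta}-(F_W^2-F_{WW})e^{-2\Theta}\Big)$$ is the Bäcklund transform of the equation $$\Omega_{vw}=-\frac{K_N}{2}\sinh(2\Omega),$$ where $\Theta$ and $\Omega$ are related by $$\Omega_x-\frac1\epsilon\Theta_y=\frac12F_x\tanh\Omega,\qquad \Omega_y-\epsilon\Theta_x=\frac12F_y\coth\Omega,$$ with $F_x=F_RR_x+F_SS_x$, $F_y=F_RR_y+F_SS_y$. That is, $\Theta$ satisfies the first equation, $\Omega$ satisfies the second, and the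 two are connected by the displayed first-order system.
   Context: Derivatives with respect to $v,w$ are $\partial_v=\tfrac12(\partial_x+\tfrac1\epsilon\partial_y)$, $\partial_w=\tfrac12(\partial_x-\tfrac1\epsilon\partial_y)$. A map $u$ is harmonic if it satisfies the Euler–Lagrange equations of $E(u)=\frac12\int_M e^{F(V,W)}(V_vW_w+V_wW_v)\,dv\,dw$; it is nontrivial if $V_vW_vV_wW_w\neq0$. A Bäcklund transformation is a system of first-order PDEs relating solutions of one PDE to solutions of another PDE; one solution is then called the Bäcklund transform of the other. *)

theory Defs
  imports "HOL-Analysis.Analysis"
begin

definition pdx :: "(real \<times> real \<Rightarrow> 'a::real_normed_vector) \<Rightarrow> real \<times> real \<Rightarrow> 'a" where
  "pdx f = (\<lambda>(x, y). vector_derivative (\<lambda>t. f (t, y)) (at x))"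

definition pdy :: "(real \<times> real \<Rightarrow> 'a::real_normed_vector) \<Rightarrow> real \<times> real \<Rightarrow> 'a" where
  "pdy f = (\<lambda>(x, y). vector_derivative (\<lambda>t. f (x, t)) (at y))"

fun iterd :: "bool list \<Rightarrow> (real \<times> real \<Rightarrow> 'a::real_normed_vector) \<Rightarrow> real \<times> real \<Rightarrow> 'a" where
  "iterd [] f = f"
| "iterd (b # bs) f = (if b then pdx else pdy) (iterd bs f)"

definition smooth2_on :: "(real \<times> real) set \<Rightarrow> (real \<times> real \<Rightarrow> 'a::real_normed_vector) \<Rightarrow> bool" where
  "smooth2_on U f \<longleftrightarrow> (\<forall>ds. iterd ds f differentiable_on U)"

text \<open>Null-coordinate derivatives for v = x + c y, w = x - c y:
  d/dv = (d/dx + (1/c) d/dy)/2 and d/dw = (d/dx - (1/c) d/dy)/2.\<close>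
definition dplus :: "complex \<Rightarrow> (real \<times> real \<Rightarrow> complex) \<Rightarrow> real \<times> real \<Rightarrow> complex" where
  "dplus c f = (\<lambda>p. (pdx f p + pdy f p / c) / 2)"

definition dminus :: "complex \<Rightarrow> (real \<times> real \<Rightarrow> complex) \<Rightarrow> real \<times> real \<Rightarrow> complex" where
  "dminus c f = (\<lambda>p. (pdx f p - pdy f p / c) / 2)"

definition Fc :: "(real \<times> real \<Rightarrow> real) \<Rightarrow> real \<times> real \<Rightarrow> complex" where
  "Fc F = (\<lambda>q. complex_of_real (F q))"

definition FV :: "complex \<Rightarrow> (real \<times> real \<Rightarrow> real) \<Rightarrow> real \<times> real \<Rightarrow> complex" where
  "FV \<delta> F = dplus \<delta> (Fc F)"

definition FW :: "complex \<Rightarrow> (real \<times> real \<Rightarrow> real) \<Rightarrow> real \<times> real \<Rightarrow> complex" where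
  "FW \<delta> F = dminus \<delta> (Fc F)"

definition FVV :: "complex \<Rightarrow> (real \<times> real \<Rightarrow> real) \<Rightarrow> real \<times> real \<Rightarrow> complex" where
  "FVV \<delta> F = dplus \<delta> (FV \<delta> F)"

definition FWW :: "complex \<Rightarrow> (real \<times> real \<Rightarrow> real) \<Rightarrow> real \<times> real \<Rightarrow> complex" where
  "FWW \<delta> F = dminus \<delta> (FW \<delta> F)"

definition FVW :: "complex \<Rightarrow> (real \<times> real \<Rightarrow> real) \<Rightarrow> real \<times> real \<Rightarrow> complex" where
  "FVW \<delta> F = dplus \<delta> (FW \<delta> F)"

definition curvN :: "complex \<Rightarrow> (real \<times> real \<Rightarrow> real) \<Rightarrow> real \<times> real \<Rightarrow> complex" where
  "curvN \<delta> F q = -2 * FVW \<delta> F q * exp (- Fc F q)"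

definition Vmap :: "complex \<Rightarrow> (real \<times> real \<Rightarrow> real) \<Rightarrow> (real \<times> real \<Rightarrow> real) \<Rightarrow> real \<times> real \<Rightarrow> complex" where
  "Vmap \<delta> R S = (\<lambda>p. complex_of_real (R p) + \<delta> * complex_of_real (S p))"

definition Wmap :: "complex \<Rightarrow> (real \<times> real \<Rightarrow> real) \<Rightarrow> (real \<times> real \<Rightarrow> real) \<Rightarrow> real \<times> real \<Rightarrow> complex" where
  "Wmap \<delta> R S = (\<lambda>p. complex_of_real (R p) - \<delta> * complex_of_real (S p))"

text \<open>Harmonic: the Euler-Lagrange equations of
  E(u) = 1/2 \<integral> e^{F(V,W)} (V_v W_w + V_w W_v) dv dw, i.e. (variation in W and in V)
  V_vw + F_V V_v V_w = 0 and W_vw + F_W W_v W_w = 0.\<close>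
definition harmonic_map :: "complex \<Rightarrow> complex \<Rightarrow> (real \<times> real \<Rightarrow> real) \<Rightarrow>
    (real \<times> real \<Rightarrow> real) \<Rightarrow> (real \<times> real \<Rightarrow> real) \<Rightarrow> (real \<times> real) set \<Rightarrow> bool" where
  "harmonic_map \<epsilon> \<delta> F R S U \<longleftrightarrow>
    (\<forall>p\<in>U.
      dplus \<epsilon> (dminus \<epsilon> (Vmap \<delta> R S)) p
        + FV \<delta> F (R p, S p) * dplus \<epsilon> (Vmap \<delta> R S) p * dminus \<epsilon> (Vmap \<delta> R S) p = 0 \<and>
      dplus \<epsilon> (dminus \<epsilon> (Wmap \<delta> R S)) p
        + FW \<delta> F (R p, S p) * dplus \<epsilon> (Wmap \<delta> R S) p * dminus \<epsilon> (Wmap \<delta> R S) p = 0)"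

definition nontrivial_map :: "complex \<Rightarrow> complex \<Rightarrow>
    (real \<times> real \<Rightarrow> real) \<Rightarrow> (real \<times> real \<Rightarrow> real) \<Rightarrow> (real \<times> real) set \<Rightarrow> bool" where
  "nontrivial_map \<epsilon> \<delta> R S U \<longleftrightarrow>
    (\<forall>p\<in>U. dplus \<epsilon> (Vmap \<delta> R S) p * dplus \<epsilon> (Wmap \<delta> R S) p
            * dminus \<epsilon> (Vmap \<delta> R S) p * dminus \<epsilon> (Wmap \<delta> R S) p \<noteq> 0)"

definition nonvanishing_jacobian :: "(real \<times> real \<Rightarrow> real) \<Rightarrow> (real \<times> real \<Rightarrow> real) \<Rightarrow> (real \<times> real) set \<Rightarrow> bool" where
  "nonvanishing_jacobian R S U \<longleftrightarrow> (\<forall>p\<in>U. pdx R p * pdy S p - pdy R p * pdx S p \<noteq> 0)"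

definition specific_coords :: "complex \<Rightarrow> complex \<Rightarrow> (real \<times> real \<Rightarrow> real) \<Rightarrow>
    (real \<times> real \<Rightarrow> real) \<Rightarrow> (real \<times> real \<Rightarrow> real) \<Rightarrow> (real \<times> real) set \<Rightarrow> bool" where
  "specific_coords \<epsilon> \<delta> F R S U \<longleftrightarrow>
    (\<forall>p\<in>U. exp (Fc F (R p, S p)) * dplus \<epsilon> (Vmap \<delta> R S) p * dplus \<epsilon> (Wmap \<delta> R S) p = 1 \<and>
           exp (Fc F (R p, S p)) * dminus \<epsilon> (Vmap \<delta> R S) p * dminus \<epsilon> (Wmap \<delta> R S) p = 1)"

definition Fx :: "(real \<times> real \<Rightarrow> real) \<Rightarrow> (real \<times> real \<Rightarrow> real) \<Rightarrow> (real \<times> real \<Rightarrow> real) \<Rightarrow> real \<times> real \<Rightarrow> real" where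
  "Fx F R S p = pdx F (R p, S p) * pdx R p + pdy F (R p, S p) * pdx S p"

definition Fy :: "(real \<times> real \<Rightarrow> real) \<Rightarrow> (real \<times> real \<Rightarrow> real) \<Rightarrow> (real \<times> real \<Rightarrow> real) \<Rightarrow> real \<times> real \<Rightarrow> real" where
  "Fy F R S p = pdx F (R p, S p) * pdy R p + pdy F (R p, S p) * pdy S p"

end

theory Submission
  imports Defs
begin

lemma pdx_has_derivative:
  assumes "(f has_derivative f') (at p)"
  shows "pdx f p = f' (1,0)"
proof -
  obtain x y where p: "p = (x,y)" by (cases p)
  have l: "((\<lambda>t. (t,y)) has_derivative (\<lambda>h. (h,0))) (at x)"
    by (auto intro!: derivative_eq_intros)
  have c: "((\<lambda>t. f (t,y)) has_derivative (\<lambda>h. f' (h,0))) (at x)"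
    using has_derivative_compose[OF l, of f f'] assms p by simp
  interpret bounded_linear f' using assms by (rule has_derivative_bounded_linear)
  have "(\<lambda>h. f' (h,0)) = (\<lambda>h. h *\<^sub>R f' (1,0))"
    by (metis scale mult.right_neutral prod.sel scaleR_Pair scaleR_zero_right real_scaleR_def)
  with c have "((\<lambda>t. f (t,y)) has_vector_derivative f' (1,0)) (at x)"
    by (simp add: has_vector_derivative_def)
  then show ?thesis by (simp add: pdx_def p vector_derivative_at)
qed

lemma pdy_has_derivative:
  assumes "(f has_derivative f') (at p)"
  shows "pdy f p = f' (0,1)"
proof -
  obtain x y where p: "p = (x,y)" by (cases p)
  have l: "((\<lambda>t. (x,t)) has_derivative (\<lambda>h. (0,h))) (at y)"
    by (auto intro!: derivative_eq_intros)
  have c: "((\<lambda>t. f (x,t)) has_derivative (\<lambda>h. f' (0,h))) (at y)"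
    using has_derivative_compose[OF l, of f f'] assms p by simp
  interpret bounded_linear f' using assms by (rule has_derivative_bounded_linear)
  have "(\<lambda>h. f' (0,h)) = (\<lambda>h. h *\<^sub>R f' (0,1))"
    by (metis scale mult.right_neutral prod.sel scaleR_Pair scaleR_zero_right real_scaleR_def)
  with c have "((\<lambda>t. f (x,t)) has_vector_derivative f' (0,1)) (at y)"
    by (simp add: has_vector_derivative_def)
  then show ?thesis by (simp add: pdy_def p vector_derivative_at)
qed

lemma has_derivative_pd:
  assumes "f differentiable at p"
  shows "(f has_derivative (\<lambda>z. fst z *\<^sub>R pdx f p + snd z *\<^sub>R pdy f p)) (at p)"
proof -
  obtain f' where d: "(f has_derivative f') (at p)" using assms by (auto simp: differentiable_def)
  interpret bounded_linear f' using d by (rule has_derivative_bounded_linear)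
  have "f' = (\<lambda>z. fst z *\<^sub>R f' (1,0) + snd z *\<^sub>R f' (0,1))"
  proof
    fix z :: "real \<times> real"
    have "z = fst z *\<^sub>R (1,0) + snd z *\<^sub>R (0,1)" by (cases z) simp
    then have "f' z = f' (fst z *\<^sub>R (1,0) + snd z *\<^sub>R (0,1))" by simp
    also have "\<dots> = fst z *\<^sub>R f' (1,0) + snd z *\<^sub>R f' (0,1)" by (simp only: add scale)
    finally show "f' z = fst z *\<^sub>R f' (1,0) + snd z *\<^sub>R f' (0,1)" .
  qed
  with d show ?thesis
    by (simp add: pdx_has_derivative[OF d] pdy_has_derivative[OF d])
qed

lemma pdx_eq_on:
  assumes "open U" "p \<in> U" "\<And>q. q \<in> U \<Longrightarrow> f q = g q"
  shows "pdx f p = pdx g p"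
proof -
  obtain x y where p: "p = (x,y)" by (cases p)
  let ?A = "{t. (t,y) \<in> U}"
  have oA: "open ?A"
    using assms(1) by (intro open_vimage[of U "\<lambda>t. (t,y)", unfolded vimage_def]) (auto intro!: continuous_intros)
  have xA: "x \<in> ?A" using assms(2) p by simp
  have "\<And>d. ((\<lambda>t. f (t,y)) has_vector_derivative d) (at x) \<longleftrightarrow> ((\<lambda>t. g (t,y)) has_vector_derivative d) (at x)"
    unfolding has_vector_derivative_def
    using has_derivative_transform_within_open[OF _ oA xA] assms(3) by (metis (no_types, lifting) mem_Collect_eq)
  then show ?thesis by (simp add: pdx_def p vector_derivative_def)
qed

lemma pdy_eq_on:
  assumes "open U" "p \<in> U" "\<And>q. q \<in> U \<Longrightarrow> f q = g q"
  shows "pdy f p = pdy g p"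
proof -
  obtain x y where p: "p = (x,y)" by (cases p)
  let ?A = "{t. (x,t) \<in> U}"
  have oA: "open ?A"
    using assms(1) by (intro open_vimage[of U "\<lambda>t. (x,t)", unfolded vimage_def]) (auto intro!: continuous_intros)
  have xA: "y \<in> ?A" using assms(2) p by simp
  have "\<And>d. ((\<lambda>t. f (x,t)) has_vector_derivative d) (at y) \<longleftrightarrow> ((\<lambda>t. g (x,t)) has_vector_derivative d) (at y)"
    unfolding has_vector_derivative_def
    using has_derivative_transform_within_open[OF _ oA xA] assms(3) by (metis (no_types, lifting) mem_Collect_eq)
  then show ?thesis by (simp add: pdy_def p vector_derivative_def)
qed

lemma differentiable_eq_on:
  assumes "open U" "p \<in> U" "\<And>q. q \<in> U \<Longrightarrow> f q = g q" "f differentiable at p"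
  shows "g differentiable at p"
  using assms has_derivative_transform_within_open unfolding differentiable_def by metis


lemma young_key:
  fixes g gx :: "real \<Rightarrow> real \<Rightarrow> 'a::real_normed_vector"
  assumes r: "r > 0"
    and pd: "\<And>a b. norm ((a,b) - (a0,b0)) < r \<Longrightarrow> ((\<lambda>t. g t b) has_vector_derivative gx a b) (at a)"
    and L: "((\<lambda>z. gx (fst z) (snd z)) has_derivative L) (at (a0,b0))"
    and e: "e > 0"
  shows "\<exists>d>0. \<forall>h. h \<noteq> 0 \<and> \<bar>h\<bar> < d \<longrightarrow>
     norm (g (a0+h) (b0+h) - g (a0+h) b0 - g a0 (b0+h) + g a0 b0 - h^2 *\<^sub>R L (0,1)) \<le> e * h^2"
proof -
  interpret L: bounded_linear L using L by (rule has_derivative_bounded_linear)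
  have "e/3 > 0" using e by simp
  then obtain d1 where d1: "d1 > 0" and d1b: "\<And>z. norm (z - (a0,b0)) < d1 \<Longrightarrow>
      norm (gx (fst z) (snd z) - gx a0 b0 - L (z - (a0,b0))) \<le> (e/3) * norm (z - (a0,b0))"
    using L[unfolded has_derivative_at_alt] by (metis fst_conv snd_conv)
  define d where "d = min d1 r / 2"
  have "d > 0" using d1 r by (simp add: d_def)
  moreover have "norm (g (a0+h) (b0+h) - g (a0+h) b0 - g a0 (b0+h) + g a0 b0 - h^2 *\<^sub>R L (0,1)) \<le> e * h^2"
    if h: "h \<noteq> 0" "\<bar>h\<bar> < d" for h
  proof -
    define c where "c = L (0,1)"
    define \<phi> where "\<phi> t = g t (b0+h) - g t b0 - (t*h) *\<^sub>R c" for t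
    define \<phi>' where "\<phi>' t = (\<lambda>s::real. s *\<^sub>R (gx t (b0+h) - gx t b0 - h *\<^sub>R c))" for t
    let ?S = "closed_segment a0 (a0+h)"
    have tS: "\<bar>t - a0\<bar> \<le> \<bar>h\<bar>" if "t \<in> ?S" for t
      using that by (auto simp: closed_segment_eq_real_ivl split: if_splits)
    have near: "norm ((t, b) - (a0,b0)) < min d1 r" if "\<bar>t-a0\<bar> \<le> \<bar>h\<bar>" "\<bar>b - b0\<bar> \<le> \<bar>h\<bar>" for t b
    proof -
      have "norm ((t, b) - (a0,b0)) = norm (t - a0, b - b0)" by simp
      also have "\<dots> \<le> norm (t - a0) + norm (b - b0)" by (rule norm_Pair_le)
      also have "\<dots> \<le> 2 * \<bar>h\<bar>" using that by simp
      also have "\<dots> < min d1 r" using h(2) by (simp add: d_def)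
      finally show ?thesis .
    qed
    have der: "(\<phi> has_derivative \<phi>' t) (at t within ?S)" if "t \<in> ?S" for t
    proof -
      have n1: "norm ((t, b0+h) - (a0,b0)) < r" using near[of t "b0+h"] tS[OF that] by simp
      have n0: "norm ((t, b0) - (a0,b0)) < r" using near[of t "b0"] tS[OF that] h by simp
      have v: "(\<phi> has_vector_derivative (gx t (b0+h) - gx t b0 - h *\<^sub>R c)) (at t)"
        unfolding \<phi>_def
        by (auto intro!: derivative_eq_intros pd[OF n1] pd[OF n0])
      show ?thesis using v unfolding has_vector_derivative_def \<phi>'_def
        by (rule has_derivative_at_withinI)
    qed
    have bound: "onorm (\<phi>' t) \<le> e * \<bar>h\<bar>" if "t \<in> ?S" for t
    proof -
      define z1 where "z1 = (t, b0+h)"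
      define z0 where "z0 = (t, b0)"
      have "onorm (\<phi>' t) = norm (gx t (b0+h) - gx t b0 - h *\<^sub>R c)"
        unfolding \<phi>'_def using onorm_scaleR_left[OF bounded_linear_ident[where 'a=real]] onorm_id[where 'a=real] by simp
      also have "gx t (b0+h) - gx t b0 - h *\<^sub>R c =
          (gx (fst z1) (snd z1) - gx a0 b0 - L (z1 - (a0,b0))) - (gx (fst z0) (snd z0) - gx a0 b0 - L (z0 - (a0,b0)))"
      proof -
        have "L (z1 - (a0,b0)) - L (z0 - (a0,b0)) = L (z1 - z0)" by (simp add: L.diff[symmetric])
        also have "z1 - z0 = h *\<^sub>R (0,1)" by (simp add: z1_def z0_def)
        also have "L (h *\<^sub>R (0,1)) = h *\<^sub>R c" using L.scale[of h "(0,1)"] by (simp add: c_def)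
        finally have "L (z1 - (a0,b0)) - L (z0 - (a0,b0)) = h *\<^sub>R c" .
        then show ?thesis by (simp add: z1_def z0_def algebra_simps)
      qed
      also have "norm \<dots> \<le> norm (gx (fst z1) (snd z1) - gx a0 b0 - L (z1 - (a0,b0))) + norm (gx (fst z0) (snd z0) - gx a0 b0 - L (z0 - (a0,b0)))"
        by (rule norm_triangle_ineq4)
      also have "\<dots> \<le> (e/3) * norm (z1 - (a0,b0)) + (e/3) * norm (z0 - (a0,b0))"
        apply (rule add_mono; rule d1b)
        using near[of t "b0+h"] near[of t b0] tS[OF that] by (auto simp: z1_def z0_def)
      also have "\<dots> \<le> (e/3) * (2*\<bar>h\<bar>) + (e/3) * \<bar>h\<bar>"
      proof -
        have "norm (z1 - (a0,b0)) \<le> 2*\<bar>h\<bar>"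
          using norm_Pair_le[of "t-a0" h] tS[OF that] by (simp add: z1_def)
        moreover have "norm (z0 - (a0,b0)) \<le> \<bar>h\<bar>"
          using tS[OF that] by (simp add: z0_def norm_Pair)
        ultimately show ?thesis using e by (intro add_mono mult_left_mono) auto
      qed
      also have "\<dots> = e * \<bar>h\<bar>" by simp
      finally show ?thesis .
    qed
    have "norm (\<phi> (a0+h) - \<phi> a0) \<le> e * \<bar>h\<bar> * norm (a0 + h - a0)"
      by (rule differentiable_bound[OF convex_closed_segment der bound]) auto
    moreover have "\<phi> (a0+h) - \<phi> a0 = g (a0+h) (b0+h) - g (a0+h) b0 - g a0 (b0+h) + g a0 b0 - h^2 *\<^sub>R c"
      by (simp add: \<phi>_def algebra_simps power2_eq_square)
    ultimately show ?thesis by (simp add: c_def power2_eq_square abs_mult_self_eq)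
  qed
  ultimately show ?thesis by blast
qed


lemma pdx_vd:
  assumes "f differentiable at (a,b)"
  shows "((\<lambda>t. f (t,b)) has_vector_derivative pdx f (a,b)) (at a)"
proof -
  have "((\<lambda>t. f (t,b)) has_derivative (\<lambda>h. (fst (h,0::real)) *\<^sub>R pdx f (a,b) + snd (h,0::real) *\<^sub>R pdy f (a,b))) (at a)"
  proof -
    have l: "((\<lambda>t. (t,b)) has_derivative (\<lambda>h. (h,0))) (at a)" by (auto intro!: derivative_eq_intros)
    show ?thesis using has_derivative_compose[OF l has_derivative_pd[OF assms]] by simp
  qed
  then show ?thesis by (simp add: has_vector_derivative_def)
qed

lemma pdy_vd:
  assumes "f differentiable at (a,b)"
  shows "((\<lambda>t. f (a,t)) has_vector_derivative pdy f (a,b)) (at b)"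
proof -
  have "((\<lambda>t. f (a,t)) has_derivative (\<lambda>h. (fst (0::real,h)) *\<^sub>R pdx f (a,b) + snd (0::real,h) *\<^sub>R pdy f (a,b))) (at b)"
  proof -
    have l: "((\<lambda>t. (a,t)) has_derivative (\<lambda>h. (0,h))) (at b)" by (auto intro!: derivative_eq_intros)
    show ?thesis using has_derivative_compose[OF l has_derivative_pd[OF assms]] by simp
  qed
  then show ?thesis by (simp add: has_vector_derivative_def)
qed

lemma schwarz:
  fixes f :: "real \<times> real \<Rightarrow> 'a::real_normed_vector"
  assumes U: "open U" "p \<in> U" and fd: "\<And>q. q \<in> U \<Longrightarrow> f differentiable at q"
    and dx: "pdx f differentiable at p" and dy: "pdy f differentiable at p"
  shows "pdx (pdy f) p = pdy (pdx f) p"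
proof -
  obtain x0 y0 where p: "p = (x0,y0)" by (cases p)
  obtain r where r: "r > 0" "ball p r \<subseteq> U" using U by (auto simp: open_contains_ball)
  have inU: "(a,b) \<in> U" if "norm ((a,b) - p) < r" for a b
    using that r by (auto simp: dist_norm norm_minus_commute)
  let ?D = "\<lambda>h. f (x0+h, y0+h) - f (x0+h, y0) - f (x0, y0+h) + f (x0, y0)"
  let ?A = "pdy (pdx f) p" and ?B = "pdx (pdy f) p"
  have k1: "\<exists>d>0. \<forall>h. h \<noteq> 0 \<and> \<bar>h\<bar> < d \<longrightarrow> norm (?D h - h^2 *\<^sub>R ?A) \<le> e * h^2" if e: "e > 0" for e
  proof -
    have L: "((\<lambda>z. pdx f (fst z, snd z)) has_derivative (\<lambda>z. fst z *\<^sub>R pdx (pdx f) p + snd z *\<^sub>R pdy (pdx f) p)) (at (x0,y0))"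
      using has_derivative_pd[OF dx] p by simp
    have "\<exists>d>0. \<forall>h. h \<noteq> 0 \<and> \<bar>h\<bar> < d \<longrightarrow>
       norm (f (x0+h, y0+h) - f (x0+h, y0) - f (x0, y0+h) + f (x0,y0) - h^2 *\<^sub>R ((\<lambda>z. fst z *\<^sub>R pdx (pdx f) p + snd z *\<^sub>R pdy (pdx f) p) (0,1))) \<le> e * h^2"
      by (rule young_key[where g="\<lambda>a b. f (a,b)" and gx="\<lambda>a b. pdx f (a,b)", OF r(1) _ L e])
         (rule pdx_vd, rule fd, rule inU, simp add: p)
    then show ?thesis by simp
  qed
  have k2: "\<exists>d>0. \<forall>h. h \<noteq> 0 \<and> \<bar>h\<bar> < d \<longrightarrow> norm (?D h - h^2 *\<^sub>R ?B) \<le> e * h^2" if e: "e > 0" for e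
  proof -
    have sw: "((\<lambda>z. (snd z, fst z)) has_derivative (\<lambda>z. (snd z, fst z))) (at (y0,x0))"
      by (auto intro!: derivative_eq_intros)
    have L: "((\<lambda>z. pdy f (snd z, fst z)) has_derivative (\<lambda>z. snd z *\<^sub>R pdx (pdy f) p + fst z *\<^sub>R pdy (pdy f) p)) (at (y0,x0))"
    proof -
      have c: "\<And>g'. (pdy f has_derivative g') (at (x0,y0)) \<Longrightarrow> ((\<lambda>z. pdy f (snd z, fst z)) has_derivative (\<lambda>z. g' (snd z, fst z))) (at (y0,x0))"
        using has_derivative_compose[OF sw, of "pdy f"] by simp
      show ?thesis using c[OF has_derivative_pd[OF dy, unfolded p]] p by simp
    qed
    have "\<exists>d>0. \<forall>h. h \<noteq> 0 \<and> \<bar>h\<bar> < d \<longrightarrow>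
       norm (f (x0+h, y0+h) - f (x0, y0+h) - f (x0+h, y0) + f (x0,y0) - h^2 *\<^sub>R ((\<lambda>z. snd z *\<^sub>R pdx (pdy f) p + fst z *\<^sub>R pdy (pdy f) p) (0,1))) \<le> e * h^2"
    proof -
      have pd: "((\<lambda>t. f (b,t)) has_vector_derivative pdy f (b,a)) (at a)" if "norm ((a,b) - (y0,x0)) < r" for a b
      proof -
        have "norm ((b,a) - p) < r" using that by (simp add: p norm_Pair add.commute)
        then show ?thesis by (intro pdy_vd fd inU)
      qed
      show ?thesis using young_key[where g="\<lambda>a b. f (b,a)" and gx="\<lambda>a b. pdy f (b,a)", OF r(1) pd L e] by simp
    qed
    then show ?thesis by (simp add: algebra_simps)
  qed
  have bnd: "norm (?A - ?B) \<le> 2 * e" if e: "e > 0" for e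
  proof -
    obtain d1 where d1: "d1 > 0" "\<forall>h. h \<noteq> 0 \<and> \<bar>h\<bar> < d1 \<longrightarrow> norm (?D h - h^2 *\<^sub>R ?A) \<le> e * h^2"
      using k1[OF e] by blast
    obtain d2 where d2: "d2 > 0" "\<forall>h. h \<noteq> 0 \<and> \<bar>h\<bar> < d2 \<longrightarrow> norm (?D h - h^2 *\<^sub>R ?B) \<le> e * h^2"
      using k2[OF e] by blast
    define h where "h = min d1 d2 / 2"
    have h: "h \<noteq> 0" "\<bar>h\<bar> < d1" "\<bar>h\<bar> < d2" using d1 d2 by (auto simp: h_def)
    have "norm (h^2 *\<^sub>R (?A - ?B)) \<le> norm (?D h - h^2 *\<^sub>R ?B) + norm (?D h - h^2 *\<^sub>R ?A)"
      by (rule order_trans[OF _ norm_triangle_ineq4]) (simp add: algebra_simps)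
    also have "\<dots> \<le> e * h^2 + e * h^2" using d1 d2 h by (intro add_mono) auto
    also have "e * h^2 + e * h^2 = h^2 * (2 * e)" by (simp add: algebra_simps)
    finally have "norm (h^2 *\<^sub>R (?A - ?B)) \<le> h^2 * (2 * e)" .
    then have "h^2 * norm (?A - ?B) \<le> h^2 * (2 * e)" by (simp only: norm_scaleR abs_power2)
    moreover have "h^2 > 0" using h by simp
    ultimately show ?thesis by simp
  qed
  have "norm (?A - ?B) \<le> 0 + e" if "e > 0" for e
  proof -
    have "e/2 > 0" using that by simp
    from bnd[OF this] show ?thesis by simp
  qed
  then have "norm (?A - ?B) \<le> 0" by (rule field_le_epsilon)
  then show ?thesis by simp
qed


type_synonym cf = "real \<times> real \<Rightarrow> complex"

lemma dfa_const[simp]: "(\<lambda>q. c) differentiable at p" by simp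
lemma dfa_id: "f differentiable at p \<Longrightarrow> (\<lambda>q. f q) differentiable at p" by simp
lemma dfa_add[simp]: "f differentiable at p \<Longrightarrow> g differentiable at p \<Longrightarrow> (\<lambda>q. f q + (g q::complex)) differentiable at p"
  by (rule differentiable_add)
lemma dfa_diff[simp]: "f differentiable at p \<Longrightarrow> g differentiable at p \<Longrightarrow> (\<lambda>q. f q - (g q::complex)) differentiable at p"
  by (rule differentiable_diff)
lemma dfa_minus[simp]: "f differentiable at p \<Longrightarrow> (\<lambda>q. - (f q::complex)) differentiable at p"
  by (rule differentiable_minus)
lemma dfa_mult[simp]: "f differentiable at p \<Longrightarrow> g differentiable at p \<Longrightarrow> (\<lambda>q. f q * (g q::complex)) differentiable at p"
  by (rule differentiable_mult)
lemma dfa_divc[simp]: "f differentiable at p \<Longrightarrow> (\<lambda>q. f q / (c::complex)) differentiable at p"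
  by (simp add: divide_inverse differentiable_mult)
lemma hd_cexp:
  assumes "(f has_derivative f') (at p)"
  shows "((\<lambda>q. exp (f q :: complex)) has_derivative (\<lambda>z. exp (f p) * f' z)) (at p)"
proof -
  have e: "(exp has_derivative (\<lambda>h. exp (f p) * h)) (at (f p))"
    using DERIV_exp[of "f p", unfolded has_field_derivative_def] by simp
  show ?thesis using has_derivative_compose[OF assms e] .
qed

lemma dfa_exp[simp]: "(\<lambda>q. exp (f q::complex)) differentiable at p" if d: "f differentiable at p"
proof -
  obtain D where "(f has_derivative D) (at p)" using d unfolding differentiable_def by blast
  from hd_cexp[OF this] show ?thesis unfolding differentiable_def by blast
qed
lemma dfa_ofreal[simp]: "f differentiable at p \<Longrightarrow> (\<lambda>q. complex_of_real (f q)) differentiable at p"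
  unfolding differentiable_def
  by (metis bounded_linear.has_derivative bounded_linear_of_real)
lemma dfa_comp[simp]:
  fixes R S :: "real \<times> real \<Rightarrow> real" and G :: "real \<times> real \<Rightarrow> 'a::real_normed_vector"
  assumes "G differentiable at (R p, S p)" "R differentiable at p" "S differentiable at p"
  shows "(\<lambda>q. G (R q, S q)) differentiable at p"
proof -
  have "(\<lambda>q. (R q, S q)) differentiable at p" using assms(2,3) by (rule differentiable_Pair)
  then show ?thesis using differentiable_chain_at[of "\<lambda>q. (R q, S q)" p G] assms(1) by (simp add: o_def)
qed

lemma pdx_const[simp]: "pdx (\<lambda>q. c) p = 0"
  using pdx_has_derivative[OF has_derivative_const[of c]] by simp
lemma pdy_const[simp]: "pdy (\<lambda>q. c) p = 0"
  using pdy_has_derivative[OF has_derivative_const[of c]] by simp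

lemma pdx_add[simp]: "f differentiable at p \<Longrightarrow> g differentiable at p \<Longrightarrow> pdx (\<lambda>q. f q + (g q::complex)) p = pdx f p + pdx g p"
  using pdx_has_derivative[OF has_derivative_add[OF has_derivative_pd has_derivative_pd]] by simp
lemma pdy_add[simp]: "f differentiable at p \<Longrightarrow> g differentiable at p \<Longrightarrow> pdy (\<lambda>q. f q + (g q::complex)) p = pdy f p + pdy g p"
  using pdy_has_derivative[OF has_derivative_add[OF has_derivative_pd has_derivative_pd]] by simp
lemma pdx_diff[simp]: "f differentiable at p \<Longrightarrow> g differentiable at p \<Longrightarrow> pdx (\<lambda>q. f q - (g q::complex)) p = pdx f p - pdx g p"
  using pdx_has_derivative[OF has_derivative_diff[OF has_derivative_pd has_derivative_pd]] by simp
lemma pdy_diff[simp]: "f differentiable at p \<Longrightarrow> g differentiable at p \<Longrightarrow> pdy (\<lambda>q. f q - (g q::complex)) p = pdy f p - pdy g p"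
  using pdy_has_derivative[OF has_derivative_diff[OF has_derivative_pd has_derivative_pd]] by simp
lemma pdx_minus[simp]: "f differentiable at p \<Longrightarrow> pdx (\<lambda>q. - (f q::complex)) p = - pdx f p"
  using pdx_has_derivative[OF has_derivative_minus[OF has_derivative_pd]] by simp
lemma pdy_minus[simp]: "f differentiable at p \<Longrightarrow> pdy (\<lambda>q. - (f q::complex)) p = - pdy f p"
  using pdy_has_derivative[OF has_derivative_minus[OF has_derivative_pd]] by simp
lemma pdx_mult[simp]:
  assumes a: "f differentiable at p" and b: "g differentiable at p"
  shows "pdx (\<lambda>q. f q * (g q::complex)) p = pdx f p * g p + f p * pdx g p"
  using pdx_has_derivative[OF has_derivative_mult[OF has_derivative_pd[OF a] has_derivative_pd[OF b]]]
  by (simp add: scaleR_conv_of_real algebra_simps)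
lemma pdy_mult[simp]:
  assumes a: "f differentiable at p" and b: "g differentiable at p"
  shows "pdy (\<lambda>q. f q * (g q::complex)) p = pdy f p * g p + f p * pdy g p"
  using pdy_has_derivative[OF has_derivative_mult[OF has_derivative_pd[OF a] has_derivative_pd[OF b]]]
  by (simp add: scaleR_conv_of_real algebra_simps)
lemma pdx_divc[simp]: "f differentiable at p \<Longrightarrow> pdx (\<lambda>q. f q / (c::complex)) p = pdx f p / c"
  using pdx_has_derivative[OF has_derivative_divide[OF has_derivative_pd has_derivative_const], of f p c]
  by (cases "c = 0") (simp_all add: scaleR_conv_of_real field_simps)
lemma pdy_divc[simp]: "f differentiable at p \<Longrightarrow> pdy (\<lambda>q. f q / (c::complex)) p = pdy f p / c"
  using pdy_has_derivative[OF has_derivative_divide[OF has_derivative_pd has_derivative_const], of f p c]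
  by (cases "c = 0") (simp_all add: scaleR_conv_of_real field_simps)
lemma pdx_exp[simp]:
  assumes a: "f differentiable at p"
  shows "pdx (\<lambda>q. exp (f q::complex)) p = exp (f p) * pdx f p"
  using pdx_has_derivative[OF hd_cexp[OF has_derivative_pd[OF a]]] by simp
lemma pdy_exp[simp]:
  assumes a: "f differentiable at p"
  shows "pdy (\<lambda>q. exp (f q::complex)) p = exp (f p) * pdy f p"
  using pdy_has_derivative[OF hd_cexp[OF has_derivative_pd[OF a]]] by simp
lemma pdx_ofreal[simp]: "f differentiable at p \<Longrightarrow> pdx (\<lambda>q. complex_of_real (f q)) p = complex_of_real (pdx f p)"
  using pdx_has_derivative[OF bounded_linear.has_derivative[OF bounded_linear_of_real has_derivative_pd]]
  by simp
lemma pdy_ofreal[simp]: "f differentiable at p \<Longrightarrow> pdy (\<lambda>q. complex_of_real (f q)) p = complex_of_real (pdy f p)"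
  using pdy_has_derivative[OF bounded_linear.has_derivative[OF bounded_linear_of_real has_derivative_pd]]
  by simp

lemma has_derivative_comp2:
  fixes R S :: "real \<times> real \<Rightarrow> real" and G :: "real \<times> real \<Rightarrow> 'a::real_normed_vector"
  assumes "G differentiable at (R p, S p)" "R differentiable at p" "S differentiable at p"
  shows "((\<lambda>q. G (R q, S q)) has_derivative (\<lambda>z. (fst z * pdx R p + snd z * pdy R p) *\<^sub>R pdx G (R p, S p)
            + (fst z * pdx S p + snd z * pdy S p) *\<^sub>R pdy G (R p, S p))) (at p)"
proof -
  have "((\<lambda>q. (R q, S q)) has_derivative (\<lambda>z. (fst z *\<^sub>R pdx R p + snd z *\<^sub>R pdy R p, fst z *\<^sub>R pdx S p + snd z *\<^sub>R pdy S p))) (at p)"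
    by (rule has_derivative_Pair[OF has_derivative_pd[OF assms(2)] has_derivative_pd[OF assms(3)]])
  from has_derivative_compose[OF this has_derivative_pd[OF assms(1)]] show ?thesis by simp
qed

lemma pdx_comp[simp]:
  fixes R S :: "real \<times> real \<Rightarrow> real" and G :: "real \<times> real \<Rightarrow> complex"
  assumes "G differentiable at (R p, S p)" "R differentiable at p" "S differentiable at p"
  shows "pdx (\<lambda>q. G (R q, S q)) p = complex_of_real (pdx R p) * pdx G (R p, S p) + complex_of_real (pdx S p) * pdy G (R p, S p)"
  using pdx_has_derivative[OF has_derivative_comp2[OF assms]] by (simp add: scaleR_conv_of_real)
lemma pdy_comp[simp]:
  fixes R S :: "real \<times> real \<Rightarrow> real" and G :: "real \<times> real \<Rightarrow> complex"
  assumes "G differentiable at (R p, S p)" "R differentiable at p" "S differentiable at p"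
  shows "pdy (\<lambda>q. G (R q, S q)) p = complex_of_real (pdy R p) * pdx G (R p, S p) + complex_of_real (pdy S p) * pdy G (R p, S p)"
  using pdy_has_derivative[OF has_derivative_comp2[OF assms]] by (simp add: scaleR_conv_of_real)

lemma pdx_comp_real:
  fixes R S G :: "real \<times> real \<Rightarrow> real"
  assumes "G differentiable at (R p, S p)" "R differentiable at p" "S differentiable at p"
  shows "pdx (\<lambda>q. G (R q, S q)) p = pdx R p * pdx G (R p, S p) + pdx S p * pdy G (R p, S p)"
  using pdx_has_derivative[OF has_derivative_comp2[OF assms]] by simp
lemma pdy_comp_real:
  fixes R S G :: "real \<times> real \<Rightarrow> real"
  assumes "G differentiable at (R p, S p)" "R differentiable at p" "S differentiable at p"
  shows "pdy (\<lambda>q. G (R q, S q)) p = pdy R p * pdx G (R p, S p) + pdy S p * pdy G (R p, S p)"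
  using pdy_has_derivative[OF has_derivative_comp2[OF assms]] by simp

lemma Fc_differentiable: "F differentiable at q \<Longrightarrow> Fc F differentiable at q"
  unfolding Fc_def by (rule dfa_ofreal)
lemma pdx_Fc: "F differentiable at q \<Longrightarrow> pdx (Fc F) q = complex_of_real (pdx F q)"
  unfolding Fc_def by (rule pdx_ofreal)
lemma pdy_Fc: "F differentiable at q \<Longrightarrow> pdy (Fc F) q = complex_of_real (pdy F q)"
  unfolding Fc_def by (rule pdy_ofreal)

lemma smooth_diff:
  assumes "smooth2_on U f" "open U" "p \<in> U"
  shows "iterd ds f differentiable at p"
  using assms unfolding smooth2_on_def by (meson differentiable_on_eq_differentiable_at)

lemma dplus_dminus_swap:
  fixes f :: cf
  assumes U: "open U" "p \<in> U" and fd: "\<And>q. q \<in> U \<Longrightarrow> f differentiable at q"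
    and dx: "pdx f differentiable at p" and dy: "pdy f differentiable at p"
  shows "dplus c (dminus c f) p = dminus c (dplus c f) p"
proof -
  have "pdx (pdy f) p = pdy (pdx f) p" by (rule schwarz[OF U fd dx dy])
  then show ?thesis
    using dx dy unfolding dplus_def dminus_def by (cases "c = 0") (simp_all add: field_simps)
qed


lemma cosh_exp: "cosh (x::complex) = (exp x + 1 / exp x) / 2"
  by (simp add: cosh_def exp_minus scaleR_conv_of_real field_simps inverse_eq_divide)
lemma sinh_exp: "sinh (x::complex) = (exp x - 1 / exp x) / 2"
  by (simp add: sinh_def exp_minus scaleR_conv_of_real field_simps inverse_eq_divide)
lemmas exp_simps = cosh_exp sinh_exp exp_add exp_diff exp_minus inverse_eq_divide

lemma A_V:
  fixes om th E \<epsilon> \<delta> :: complex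
  assumes "\<epsilon> \<noteq> 0" "\<delta> \<noteq> 0"
  shows "(2*E*cosh om*cosh th + \<delta>*((2/\<delta>)*E*cosh om* sinh th) + (2*\<epsilon>*E* sinh om* sinh th + \<delta>*((2*\<epsilon>/\<delta>)*E* sinh om*cosh th))/\<epsilon>)/2 = E * exp (th + om)"
    and "(2*E*cosh om*cosh th + \<delta>*((2/\<delta>)*E*cosh om* sinh th) - (2*\<epsilon>*E* sinh om* sinh th + \<delta>*((2*\<epsilon>/\<delta>)*E* sinh om*cosh th))/\<epsilon>)/2 = E * exp (th - om)"
    and "(2*E*cosh om*cosh th - \<delta>*((2/\<delta>)*E*cosh om* sinh th) + (2*\<epsilon>*E* sinh om* sinh th - \<delta>*((2*\<epsilon>/\<delta>)*E* sinh om*cosh th))/\<epsilon>)/2 = E * exp (- th - om)"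
    and "(2*E*cosh om*cosh th - \<delta>*((2/\<delta>)*E*cosh om* sinh th) - (2*\<epsilon>*E* sinh om* sinh th - \<delta>*((2*\<epsilon>/\<delta>)*E* sinh om*cosh th))/\<epsilon>)/2 = E * exp (om - th)"
  using assms by (simp_all add: exp_simps field_simps)

lemma A_pv:
  fixes om th E \<epsilon> \<delta> cR cS :: complex
  assumes "\<epsilon> \<noteq> 0" "\<delta> \<noteq> 0"
  shows "((cR * (2*E*cosh om*cosh th) + cS*((2/\<delta>)*E*cosh om* sinh th)) + (cR*(2*\<epsilon>*E* sinh om* sinh th) + cS*((2*\<epsilon>/\<delta>)*E* sinh om*cosh th))/\<epsilon>)/2
     = (cR + cS/\<delta>)/2 * (E * exp (th + om)) + (cR - cS/\<delta>)/2 * (E * exp (- th - om))"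
    and "((cR * (2*E*cosh om*cosh th) + cS*((2/\<delta>)*E*cosh om* sinh th)) - (cR*(2*\<epsilon>*E* sinh om* sinh th) + cS*((2*\<epsilon>/\<delta>)*E* sinh om*cosh th))/\<epsilon>)/2
     = (cR + cS/\<delta>)/2 * (E * exp (th - om)) + (cR - cS/\<delta>)/2 * (E * exp (om - th))"
  using assms by (simp_all add: exp_simps field_simps)

lemma B_H1:
  fixes E e1 e2 e3 FV FW X Y Tx Ty Ox Oy \<epsilon> :: complex
  assumes "E \<noteq> 0" "e1 \<noteq> 0" "\<epsilon> \<noteq> 0"
    and h: "E*e1*((-X/2 + (Tx - Ox)) + (-Y/2 + (Ty - Oy))/\<epsilon>)/2 + FV * (E*e2) * (E*e1) = 0"
    and pv: "(X + Y/\<epsilon>)/2 = FV*(E*e2) + FW*(E*e3)"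
  shows "(Tx + Ty/\<epsilon>)/2 - (Ox + Oy/\<epsilon>)/2 = 1/2*E*(FW*e3 - FV*e2)"
proof -
  let ?Z = "((-X/2 + (Tx - Ox)) + (-Y/2 + (Ty - Oy))/\<epsilon>)/2"
  have "E*e1*(?Z + FV*(E*e2)) = E*e1*((-X/2 + (Tx - Ox)) + (-Y/2 + (Ty - Oy))/\<epsilon>)/2 + FV * (E*e2) * (E*e1)"
    by (simp add: algebra_simps)
  also have "\<dots> = 0" by (rule h)
  finally have "?Z + FV*(E*e2) = 0" using assms(1,2) by simp
  then have Zeq: "?Z = - FV * (E*e2)" by (simp add: eq_neg_iff_add_eq_0)
  have "(Tx + Ty/\<epsilon>)/2 - (Ox + Oy/\<epsilon>)/2 = ?Z + ((X + Y/\<epsilon>)/2)/2"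
    using assms(3) by (simp add: field_simps)
  also have "\<dots> = - FV * (E*e2) + (FV*(E*e2) + FW*(E*e3))/2" by (simp only: Zeq pv)
  also have "\<dots> = 1/2*E*(FW*e3 - FV*e2)" by (simp add: field_simps)
  finally show ?thesis .
qed


lemma B_H2:
  fixes E e1 e2 e4 FV FW X Y Tx Ty Ox Oy \<epsilon> :: complex
  assumes "E \<noteq> 0" "e2 \<noteq> 0" "\<epsilon> \<noteq> 0"
    and h: "E*e2*((-X/2 + (Tx + Ox)) - (-Y/2 + (Ty + Oy))/\<epsilon>)/2 + FV * (E*e2) * (E*e1) = 0"
    and pw: "(X - Y/\<epsilon>)/2 = FV*(E*e1) + FW*(E*e4)"
  shows "(Tx - Ty/\<epsilon>)/2 + (Ox - Oy/\<epsilon>)/2 = 1/2*E*(FW*e4 - FV*e1)"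
proof -
  let ?Z = "((-X/2 + (Tx + Ox)) - (-Y/2 + (Ty + Oy))/\<epsilon>)/2"
  have "E*e2*(?Z + FV*(E*e1)) = E*e2*((-X/2 + (Tx + Ox)) - (-Y/2 + (Ty + Oy))/\<epsilon>)/2 + FV * (E*e2) * (E*e1)"
    by (simp add: algebra_simps)
  also have "\<dots> = 0" by (rule h)
  finally have "?Z + FV*(E*e1) = 0" using assms(1,2) by simp
  then have Zeq: "?Z = - FV * (E*e1)" by (simp add: eq_neg_iff_add_eq_0)
  have "(Tx - Ty/\<epsilon>)/2 + (Ox - Oy/\<epsilon>)/2 = ?Z + ((X - Y/\<epsilon>)/2)/2"
    using assms(3) by (simp add: field_simps)
  also have "\<dots> = - FV * (E*e1) + (FV*(E*e1) + FW*(E*e4))/2" by (simp only: Zeq pw)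
  also have "\<dots> = 1/2*E*(FW*e4 - FV*e1)" by (simp add: field_simps)
  finally show ?thesis .
qed


lemma C34:
  fixes om th E \<epsilon> \<delta> cR cS Tx Ty Ox Oy :: complex
  assumes "\<epsilon> \<noteq> 0" "\<delta> \<noteq> 0" "cosh om \<noteq> 0" "sinh om \<noteq> 0"
    and H1: "(Tx + Ty/\<epsilon>)/2 - (Ox + Oy/\<epsilon>)/2 = 1/2*E*((cR - cS/\<delta>)/2 * exp (-th- om) - (cR+cS/\<delta>)/2 * exp (th+ om))"
    and H2: "(Tx - Ty/\<epsilon>)/2 + (Ox - Oy/\<epsilon>)/2 = 1/2*E*((cR - cS/\<delta>)/2 * exp (om-th) - (cR+cS/\<delta>)/2 * exp (th- om))"
  shows "Ox - Ty/\<epsilon> = (cR*(2*E*cosh om*cosh th) + cS*((2/\<delta>)*E*cosh om* sinh th))/2 * tanh om"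
    and "Oy - \<epsilon>*Tx = (cR*(2*\<epsilon>*E* sinh om* sinh th) + cS*((2*\<epsilon>/\<delta>)*E* sinh om*cosh th))/2 * (cosh om / sinh om)"
proof -
  let ?X = "cR*(2*E*cosh om*cosh th) + cS*((2/\<delta>)*E*cosh om* sinh th)"
  let ?Y = "cR*(2*\<epsilon>*E* sinh om* sinh th) + cS*((2*\<epsilon>/\<delta>)*E* sinh om*cosh th)"
  let ?H1 = "1/2*E*((cR - cS/\<delta>)/2 * exp (-th- om) - (cR+cS/\<delta>)/2 * exp (th+ om))"
  let ?H2 = "1/2*E*((cR - cS/\<delta>)/2 * exp (om-th) - (cR+cS/\<delta>)/2 * exp (th- om))"
  have "Ox - Ty/\<epsilon> = ((Tx - Ty/\<epsilon>)/2 + (Ox - Oy/\<epsilon>)/2) - ((Tx + Ty/\<epsilon>)/2 - (Ox + Oy/\<epsilon>)/2)"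
    by (simp add: field_simps)
  also have "\<dots> = ?H2 - ?H1" by (simp only: H1 H2)
  also have "\<dots> = ?X/2 * tanh om"
  proof -
    have k: "(?H2 - ?H1) * cosh om = ?X/2 * sinh om"
      using assms(2) by (simp add: exp_simps field_simps)
    have "?X/2 * tanh om = (?X/2 * sinh om) / cosh om" by (simp add: tanh_def)
    also have "\<dots> = ?H2 - ?H1" unfolding k[symmetric] using assms(3) by simp
    finally show ?thesis by simp
  qed
  finally show "Ox - Ty/\<epsilon> = ?X/2 * tanh om" .
  have "Oy - \<epsilon>*Tx = - \<epsilon> * (((Tx + Ty/\<epsilon>)/2 - (Ox + Oy/\<epsilon>)/2) + ((Tx - Ty/\<epsilon>)/2 + (Ox - Oy/\<epsilon>)/2))"
    using assms(1) by (simp add: field_simps)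
  also have "\<dots> = - \<epsilon> * (?H1 + ?H2)" by (simp only: H1 H2)
  also have "\<dots> = ?Y/2 * (cosh om / sinh om)"
  proof -
    have k: "(- \<epsilon> * (?H1 + ?H2)) * sinh om = ?Y/2 * cosh om"
      using assms(1,2) by (simp add: exp_simps field_simps)
    have "?Y/2 * (cosh om / sinh om) = (?Y/2 * cosh om) / sinh om" by simp
    also have "\<dots> = - \<epsilon> * (?H1 + ?H2)" unfolding k[symmetric] using assms(4) by simp
    finally show ?thesis by simp
  qed
  finally show "Oy - \<epsilon>*Tx = ?Y/2 * (cosh om / sinh om)" .
qed


lemma dpm_const[simp]: "dplus c (\<lambda>q. k) p = 0" "dminus c (\<lambda>q. k) p = 0"
  unfolding dplus_def dminus_def by simp_all

lemma dpm_add[simp]: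
  assumes "f differentiable at p" "g differentiable at p"
  shows "dplus c (\<lambda>q. f q + g q) p = dplus c f p + dplus c g p"
    "dminus c (\<lambda>q. f q + g q) p = dminus c f p + dminus c g p"
  unfolding dplus_def dminus_def using assms by (simp_all add: add_divide_distrib diff_divide_distrib algebra_simps)

lemma dpm_diff[simp]:
  assumes "f differentiable at p" "g differentiable at p"
  shows "dplus c (\<lambda>q. f q - g q) p = dplus c f p - dplus c g p"
    "dminus c (\<lambda>q. f q - g q) p = dminus c f p - dminus c g p"
  unfolding dplus_def dminus_def using assms by (simp_all add: add_divide_distrib diff_divide_distrib algebra_simps)

lemma dpm_minus[simp]:
  assumes "f differentiable at p"
  shows "dplus c (\<lambda>q. - f q) p = - dplus c f p"
    "dminus c (\<lambda>q. - f q) p = - dminus c f p"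
  unfolding dplus_def dminus_def using assms by (simp_all add: add_divide_distrib diff_divide_distrib algebra_simps)

lemma dpm_mult[simp]:
  assumes "f differentiable at p" "g differentiable at p"
  shows "dplus c (\<lambda>q. f q * g q) p = dplus c f p * g p + f p * dplus c g p"
    "dminus c (\<lambda>q. f q * g q) p = dminus c f p * g p + f p * dminus c g p"
  unfolding dplus_def dminus_def using assms by (simp_all add: add_divide_distrib diff_divide_distrib algebra_simps)

lemma dpm_divc[simp]:
  assumes "f differentiable at p"
  shows "dplus c (\<lambda>q. f q / k) p = dplus c f p / k"
    "dminus c (\<lambda>q. f q / k) p = dminus c f p / k"
  unfolding dplus_def dminus_def using assms by (simp_all add: add_divide_distrib diff_divide_distrib algebra_simps)

lemma dpm_exp[simp]:
  assumes "f differentiable at p"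
  shows "dplus c (\<lambda>q. exp (f q)) p = exp (f p) * dplus c f p"
    "dminus c (\<lambda>q. exp (f q)) p = exp (f p) * dminus c f p"
  unfolding dplus_def dminus_def using assms by (simp_all add: add_divide_distrib diff_divide_distrib algebra_simps)

lemma dfa_dplus:
  assumes "pdx f differentiable at p" "pdy f differentiable at p"
  shows "dplus c f differentiable at p" "dminus c f differentiable at p"
  unfolding dplus_def dminus_def using assms by simp_all

lemma dplus_comp_chain:
  fixes R S :: "real \<times> real \<Rightarrow> real" and G :: "real \<times> real \<Rightarrow> complex"
  assumes "G differentiable at (R p, S p)" "R differentiable at p" "S differentiable at p"
  shows "dplus c (\<lambda>q. G (R q, S q)) p = ((pdx G (R p, S p) * complex_of_real (pdx R p) + pdy G (R p, S p) * complex_of_real (pdx S p))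
         + (pdx G (R p, S p) * complex_of_real (pdy R p) + pdy G (R p, S p) * complex_of_real (pdy S p)) / c) / 2"
    "dminus c (\<lambda>q. G (R q, S q)) p = ((pdx G (R p, S p) * complex_of_real (pdx R p) + pdy G (R p, S p) * complex_of_real (pdx S p))
         - (pdx G (R p, S p) * complex_of_real (pdy R p) + pdy G (R p, S p) * complex_of_real (pdy S p)) / c) / 2"
  unfolding dplus_def dminus_def using assms by (simp_all add: ac_simps)

lemma dpm_eq_on:
  assumes "open U" "p \<in> U" "\<And>q. q \<in> U \<Longrightarrow> f q = g q"
  shows "dplus c f p = dplus c g p" "dminus c f p = dminus c g p"
  unfolding dplus_def dminus_def using pdx_eq_on[OF assms] pdy_eq_on[OF assms] by simp_all


lemma X1:
  fixes a b E FV FW FVV FVW FWW :: complex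
  assumes "a \<noteq> 0" "b \<noteq> 0"
  shows "1/2*((E*(-(FV*(E*(b/a)) + FW*(E*(a/b)))/2))*(FW*(1/(a*b)) - FV*(a*b)) + E*((FVW*(E*(b/a)) + FWW*(E*(a/b)))*(1/(a*b)) + FW*((1/(a*b))*(-(1/2*E*(FW*(a/b) - FV*(b/a))))) - ((FVV*(E*(b/a)) + FVW*(E*(a/b)))*(a*b) + FV*((a*b)*(1/2*E*(FW*(a/b) - FV*(b/a)))))))
    = 1/2*E*E*((FV^2-FVV)*(b*b) - (FW^2-FWW)/(b*b) + FVW*(1/(a*a) - a*a))"
  using assms by (simp add: field_simps power2_eq_square)

lemma X2:
  fixes a b E FV FW FVV FVW FWW :: complex
  assumes "a \<noteq> 0" "b \<noteq> 0"
  shows "1/2*((E*(-(FV*(E*(a*b)) + FW*(E*(1/(a*b))))/2))*(FW*(a/b) - FV*(b/a)) + E*((FVW*(E*(a*b)) + FWW*(E*(1/(a*b))))*(a/b) + FW*((a/b)*(-(1/2*E*(FW*(1/(a*b)) - FV*(a*b))))) - ((FVV*(E*(a*b)) + FVW*(E*(1/(a*b))))*(b/a) + FV*((b/a)*(1/2*E*(FW*(1/(a*b)) - FV*(a*b)))))))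
    = 1/2*E*E*((FV^2-FVV)*(b*b) - (FW^2-FWW)/(b*b) + FVW*(a*a - 1/(a*a)))"
  using assms by (simp add: field_simps power2_eq_square)

lemma D_final:
  fixes E om th FV FW FVV FVW FWW Tw Ow Tv Ov Avw Bvw :: complex
  assumes H1: "Tv - Ov = 1/2*E*(FW*exp (-th- om) - FV*exp (th+ om))"
    and H2: "Tw + Ow = 1/2*E*(FW*exp (om-th) - FV*exp (th- om))"
    and A: "Avw - Bvw = 1/2*((E*(-(FV*(E*exp (th- om)) + FW*(E*exp (om-th)))/2)) * (FW*exp (-th- om) - FV*exp (th+ om))
        + E*((FVW*(E*exp (th- om)) + FWW*(E*exp (om-th)))*exp (-th- om) + FW*(exp (-th- om)*(-(Tw + Ow)))
        - ((FVV*(E*exp (th- om)) + FVW*(E*exp (om-th)))*exp (th+ om) + FV*(exp (th+ om)*(Tw + Ow)))))"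
    and B: "Avw + Bvw = 1/2*((E*(-(FV*(E*exp (th+ om)) + FW*(E*exp (-th- om)))/2)) * (FW*exp (om-th) - FV*exp (th- om))
        + E*((FVW*(E*exp (th+ om)) + FWW*(E*exp (-th- om)))*exp (om-th) + FW*(exp (om-th)*(-(Tv - Ov)))
        - ((FVV*(E*exp (th+ om)) + FVW*(E*exp (-th- om)))*exp (th- om) + FV*(exp (th- om)*(Tv - Ov)))))"
  shows "2*Avw = E*E*((FV^2 - FVV)*exp (2*th) - (FW^2 - FWW)*exp (-2*th))"
    and "Bvw = -((-2*FVW*(E*E))/2) * sinh (2* om)"
proof -
  define a where "a = exp om"
  define b where "b = exp th"
  have nz: "a \<noteq> 0" "b \<noteq> 0" by (simp_all add: a_def b_def)
  have ex: "exp (th- om) = b/a" "exp (om-th) = a/b" "exp (-th- om) = 1/(a*b)" "exp (th+ om) = a*b"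
    unfolding a_def b_def
    apply (simp add: exp_diff)
    apply (simp add: exp_diff)
    apply (simp add: exp_diff exp_minus inverse_eq_divide mult.commute)
    apply (simp add: exp_add mult.commute)
    done
  have e2a: "exp (2*th) = b * b" "exp (2* om) = a * a"
    unfolding a_def b_def by (simp_all only: mult_2 exp_add)
  have "exp (-2*th) * exp (2*th) = 1" by (simp add: exp_add[symmetric])
  then have e2b: "exp (-2*th) = 1/(b*b)" using nz unfolding e2a(1) by (simp add: field_simps)
  have e2c: "sinh (2* om) = (a * a - 1/(a * a))/2"
    by (simp only: sinh_exp e2a)
  note e2 = e2a(1) e2b e2c
  have A': "Avw - Bvw = 1/2*E*E*((FV^2-FVV)*(b*b) - (FW^2-FWW)/(b*b) + FVW*(1/(a*a) - a*a))"
    using A unfolding H2 ex X1[OF nz] .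
  have B': "Avw + Bvw = 1/2*E*E*((FV^2-FVV)*(b*b) - (FW^2-FWW)/(b*b) + FVW*(a*a - 1/(a*a)))"
    using B unfolding H1 ex X2[OF nz] .
  have "2*Avw = (Avw - Bvw) + (Avw + Bvw)" by simp
  also have "\<dots> = E*E*((FV^2 - FVV)*exp (2*th) - (FW^2 - FWW)*exp (-2*th))"
    unfolding A' B' e2 using nz by (simp add: field_simps)
  finally show "2*Avw = E*E*((FV^2 - FVV)*exp (2*th) - (FW^2 - FWW)*exp (-2*th))" .
  have "Bvw = ((Avw + Bvw) - (Avw - Bvw))/2" by simp
  also have "\<dots> = -((-2*FVW*(E*E))/2) * sinh (2* om)"
    unfolding A' B' e2 using nz by (simp add: field_simps)
  finally show "Bvw = -((-2*FVW*(E*E))/2) * sinh (2* om)" .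
qed


theorem proposition4p1:
  fixes \<epsilon> \<delta> :: complex
    and U D :: "(real \<times> real) set"
    and F R S :: "real \<times> real \<Rightarrow> real"
    and \<Omega> \<Theta> :: "real \<times> real \<Rightarrow> complex"
  assumes eps: "\<epsilon> \<in> {1, \<i>}" and del: "\<delta> \<in> {1, \<i>}"
    and U_open: "open U" and D_open: "open D"
    and F_smooth: "smooth2_on D F"
    and R_smooth: "smooth2_on U R" and S_smooth: "smooth2_on U S"
    and u_maps: "\<forall>p\<in>U. (R p, S p) \<in> D"
    and harm: "harmonic_map \<epsilon> \<delta> F R S U"
    and nontriv: "nontrivial_map \<epsilon> \<delta> R S U"
    and jac: "nonvanishing_jacobian R S U"
    and spec: "specific_coords \<epsilon> \<delta> F R S U"
    and Om_smooth: "smooth2_on U \<Omega>" and Th_smooth: "smooth2_on U \<Theta>"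
    and Om_defined: "\<forall>p\<in>U. sinh (\<Omega> p) \<noteq> 0 \<and> cosh (\<Omega> p) \<noteq> 0"
    and Rx: "\<forall>p\<in>U. complex_of_real (pdx R p)
               = 2 * exp (- Fc F (R p, S p) / 2) * cosh (\<Omega> p) * cosh (\<Theta> p)"
    and Ry: "\<forall>p\<in>U. complex_of_real (pdy R p)
               = 2 * \<epsilon> * exp (- Fc F (R p, S p) / 2) * sinh (\<Omega> p) * sinh (\<Theta> p)"
    and Sx: "\<forall>p\<in>U. complex_of_real (pdx S p)
               = (2 / \<delta>) * exp (- Fc F (R p, S p) / 2) * cosh (\<Omega> p) * sinh (\<Theta> p)"
    and Sy: "\<forall>p\<in>U. complex_of_real (pdy S p)
               = (2 * \<epsilon> / \<delta>) * exp (- Fc F (R p, S p) / 2) * sinh (\<Omega> p) * cosh (\<Theta> p)"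
  shows "\<forall>p\<in>U.
      2 * dplus \<epsilon> (dminus \<epsilon> \<Theta>) p
        = exp (- Fc F (R p, S p)) *
          (((FV \<delta> F (R p, S p))\<^sup>2 - FVV \<delta> F (R p, S p)) * exp (2 * \<Theta> p)
           - ((FW \<delta> F (R p, S p))\<^sup>2 - FWW \<delta> F (R p, S p)) * exp (- 2 * \<Theta> p))
    \<and> dplus \<epsilon> (dminus \<epsilon> \<Omega>) p = - (curvN \<delta> F (R p, S p) / 2) * sinh (2 * \<Omega> p)
    \<and> pdx \<Omega> p - pdy \<Theta> p / \<epsilon> = complex_of_real (Fx F R S p) / 2 * tanh (\<Omega> p)
    \<and> pdy \<Omega> p - \<epsilon> * pdx \<Theta> p
        = complex_of_real (Fy F R S p) / 2 * (cosh (\<Omega> p) / sinh (\<Omega> p))"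
proof -
  have en: "\<epsilon> \<noteq> 0" using eps by auto
  have dn: "\<delta> \<noteq> 0" using del by auto
  have dU: "iterd ds f differentiable at p" if "smooth2_on U f" "p \<in> U" for ds and f :: "real \<times> real \<Rightarrow> 'z::real_normed_vector" and p
    using smooth_diff[OF that(1) U_open that(2)] .
  have dD: "iterd ds F differentiable at q" if "q \<in> D" for ds q
    using smooth_diff[OF F_smooth D_open that] .
  note dR = smooth_diff[where ds="[]", OF R_smooth U_open, simplified] smooth_diff[where ds="[True]", OF R_smooth U_open, simplified] smooth_diff[where ds="[False]", OF R_smooth U_open, simplified]
  note dS = smooth_diff[where ds="[]", OF S_smooth U_open, simplified] smooth_diff[where ds="[True]", OF S_smooth U_open, simplified] smooth_diff[where ds="[False]", OF S_smooth U_open, simplified]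
  note dOm = smooth_diff[where ds="[]", OF Om_smooth U_open, simplified] smooth_diff[where ds="[True]", OF Om_smooth U_open, simplified] smooth_diff[where ds="[False]", OF Om_smooth U_open, simplified]
  note dTh = smooth_diff[where ds="[]", OF Th_smooth U_open, simplified] smooth_diff[where ds="[True]", OF Th_smooth U_open, simplified] smooth_diff[where ds="[False]", OF Th_smooth U_open, simplified]
  have uD: "(R p, S p) \<in> D" if "p \<in> U" for p using u_maps that by blast
  note dF = smooth_diff[where ds="[]", OF F_smooth D_open, simplified] smooth_diff[where ds="[True]", OF F_smooth D_open, simplified] smooth_diff[where ds="[False]", OF F_smooth D_open, simplified]
  have dFc: "Fc F differentiable at q" if "q \<in> D" for q using Fc_differentiable[OF dF(1)[OF that]] .
  have pdxFc_eq: "pdx (Fc F) q = complex_of_real (pdx F q)" if "q \<in> D" for q using pdx_Fc[OF dF(1)[OF that]] .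
  have pdyFc_eq: "pdy (Fc F) q = complex_of_real (pdy F q)" if "q \<in> D" for q using pdy_Fc[OF dF(1)[OF that]] .
  have dpdxFc: "pdx (Fc F) differentiable at q" if "q \<in> D" for q
    by (rule differentiable_eq_on[OF D_open that, of "\<lambda>q. complex_of_real (pdx F q)"])
       (simp_all add: pdxFc_eq dF(2)[OF that])
  have dpdyFc: "pdy (Fc F) differentiable at q" if "q \<in> D" for q
    by (rule differentiable_eq_on[OF D_open that, of "\<lambda>q. complex_of_real (pdy F q)"])
       (simp_all add: pdyFc_eq dF(3)[OF that])
  have dFV: "FV \<delta> F differentiable at q" if "q \<in> D" for q
    unfolding FV_def dplus_def using dpdxFc[OF that] dpdyFc[OF that] by simp
  have dFW: "FW \<delta> F differentiable at q" if "q \<in> D" for q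
    unfolding FW_def dminus_def using dpdxFc[OF that] dpdyFc[OF that] by simp
  have FVq: "FV \<delta> F q = (complex_of_real (pdx F q) + complex_of_real (pdy F q) / \<delta>) / 2" if "q \<in> D" for q
    unfolding FV_def dplus_def using that by (simp add: pdxFc_eq pdyFc_eq)
  have FWq: "FW \<delta> F q = (complex_of_real (pdx F q) - complex_of_real (pdy F q) / \<delta>) / 2" if "q \<in> D" for q
    unfolding FW_def dminus_def using that by (simp add: pdxFc_eq pdyFc_eq)
  have FVW_sym: "dminus \<delta> (FV \<delta> F) q = FVW \<delta> F q" if "q \<in> D" for q
    unfolding FVW_def FV_def FW_def
    by (rule dplus_dminus_swap[OF D_open that dFc dpdxFc[OF that] dpdyFc[OF that], symmetric])

  have phix: "pdx (\<lambda>p. Fc F (R p, S p)) p = complex_of_real (Fx F R S p)" if "p \<in> U" for p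
    using that uD[OF that] dR dS dFc by (simp add: Fx_def pdxFc_eq pdyFc_eq ac_simps)
  have phiy: "pdy (\<lambda>p. Fc F (R p, S p)) p = complex_of_real (Fy F R S p)" if "p \<in> U" for p
    using that uD[OF that] dR dS dFc by (simp add: Fy_def pdxFc_eq pdyFc_eq ac_simps)

  have Vx: "pdx (Vmap \<delta> R S) p = complex_of_real (pdx R p) + \<delta> * complex_of_real (pdx S p)" if "p \<in> U" for p
    unfolding Vmap_def using dR dS that by simp
  have Vy: "pdy (Vmap \<delta> R S) p = complex_of_real (pdy R p) + \<delta> * complex_of_real (pdy S p)" if "p \<in> U" for p
    unfolding Vmap_def using dR dS that by simp
  have Wx: "pdx (Wmap \<delta> R S) p = complex_of_real (pdx R p) - \<delta> * complex_of_real (pdx S p)" if "p \<in> U" for p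
    unfolding Wmap_def using dR dS that by simp
  have Wy: "pdy (Wmap \<delta> R S) p = complex_of_real (pdy R p) - \<delta> * complex_of_real (pdy S p)" if "p \<in> U" for p
    unfolding Wmap_def using dR dS that by simp
  have Vv: "dplus \<epsilon> (Vmap \<delta> R S) p = exp (- Fc F (R p, S p) / 2) * exp (\<Theta> p + \<Omega> p)" if "p \<in> U" for p
    unfolding dplus_def Vx[OF that] Vy[OF that] Rx[rule_format, OF that] Ry[rule_format, OF that]
      Sx[rule_format, OF that] Sy[rule_format, OF that] by (rule A_V(1)[OF en dn])
  have Vw: "dminus \<epsilon> (Vmap \<delta> R S) p = exp (- Fc F (R p, S p) / 2) * exp (\<Theta> p - \<Omega> p)" if "p \<in> U" for p
    unfolding dminus_def Vx[OF that] Vy[OF that] Rx[rule_format, OF that] Ry[rule_format, OF that]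
      Sx[rule_format, OF that] Sy[rule_format, OF that] by (rule A_V(2)[OF en dn])
  have Wv: "dplus \<epsilon> (Wmap \<delta> R S) p = exp (- Fc F (R p, S p) / 2) * exp (- \<Theta> p - \<Omega> p)" if "p \<in> U" for p
    unfolding dplus_def Wx[OF that] Wy[OF that] Rx[rule_format, OF that] Ry[rule_format, OF that]
      Sx[rule_format, OF that] Sy[rule_format, OF that] by (rule A_V(3)[OF en dn])
  have Ww: "dminus \<epsilon> (Wmap \<delta> R S) p = exp (- Fc F (R p, S p) / 2) * exp (\<Omega> p - \<Theta> p)" if "p \<in> U" for p
    unfolding dminus_def Wx[OF that] Wy[OF that] Rx[rule_format, OF that] Ry[rule_format, OF that]
      Sx[rule_format, OF that] Sy[rule_format, OF that] by (rule A_V(4)[OF en dn])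

  have gx: "pdx (\<lambda>p. exp (- Fc F (R p, S p) / 2) * exp (h p)) p
      = exp (- Fc F (R p, S p) / 2) * exp (h p) * (- complex_of_real (Fx F R S p) / 2 + pdx h p)"
    if "p \<in> U" "h differentiable at p" for p h
    using that uD[OF that(1)] dR dS dFc by (simp del: pdx_comp pdy_comp add: phix algebra_simps)
  have gy: "pdy (\<lambda>p. exp (- Fc F (R p, S p) / 2) * exp (h p)) p
      = exp (- Fc F (R p, S p) / 2) * exp (h p) * (- complex_of_real (Fy F R S p) / 2 + pdy h p)"
    if "p \<in> U" "h differentiable at p" for p h
    using that uD[OF that(1)] dR dS dFc by (simp del: pdx_comp pdy_comp add: phiy algebra_simps)

  have dV: "Vmap \<delta> R S differentiable at q" if "q \<in> U" for q
    unfolding Vmap_def using dR dS that by simp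
  have dW: "Wmap \<delta> R S differentiable at q" if "q \<in> U" for q
    unfolding Wmap_def using dR dS that by simp
  have dVx: "pdx (Vmap \<delta> R S) differentiable at p" if "p \<in> U" for p
    by (rule differentiable_eq_on[OF U_open that, of "\<lambda>p. complex_of_real (pdx R p) + \<delta> * complex_of_real (pdx S p)"])
       (use Vx dR dS that in simp_all)
  have dVy: "pdy (Vmap \<delta> R S) differentiable at p" if "p \<in> U" for p
    by (rule differentiable_eq_on[OF U_open that, of "\<lambda>p. complex_of_real (pdy R p) + \<delta> * complex_of_real (pdy S p)"])
       (use Vy dR dS that in simp_all)

  have H12: "(pdx \<Theta> p + pdy \<Theta> p/\<epsilon>)/2 - (pdx \<Omega> p + pdy \<Omega> p/\<epsilon>)/2
        = 1/2*exp (- Fc F (R p, S p) / 2)*(FW \<delta> F (R p, S p)*exp (-\<Theta> p - \<Omega> p) - FV \<delta> F (R p, S p)*exp (\<Theta> p + \<Omega> p))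
     \<and> (pdx \<Theta> p - pdy \<Theta> p/\<epsilon>)/2 + (pdx \<Omega> p - pdy \<Omega> p/\<epsilon>)/2
        = 1/2*exp (- Fc F (R p, S p) / 2)*(FW \<delta> F (R p, S p)*exp (\<Omega> p - \<Theta> p) - FV \<delta> F (R p, S p)*exp (\<Theta> p - \<Omega> p))"
    if pU: "p \<in> U" for p
  proof -
    let ?E = "exp (- Fc F (R p, S p) / 2)"
    let ?q = "(R p, S p)"
    have dTO: "(\<lambda>p. \<Theta> p - \<Omega> p) differentiable at p" "(\<lambda>p. \<Theta> p + \<Omega> p) differentiable at p"
      using dTh dOm pU by simp_all
    have L1: "dplus \<epsilon> (dminus \<epsilon> (Vmap \<delta> R S)) p
       = ?E * exp (\<Theta> p - \<Omega> p) * ((- complex_of_real (Fx F R S p) / 2 + (pdx \<Theta> p - pdx \<Omega> p))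
            + (- complex_of_real (Fy F R S p) / 2 + (pdy \<Theta> p - pdy \<Omega> p)) / \<epsilon>) / 2"
    proof -
      have "pdx (dminus \<epsilon> (Vmap \<delta> R S)) p = pdx (\<lambda>p. exp (- Fc F (R p, S p) / 2) * exp (\<Theta> p - \<Omega> p)) p"
        by (rule pdx_eq_on[OF U_open pU]) (simp add: Vw)
      also have "\<dots> = ?E * exp (\<Theta> p - \<Omega> p) * (- complex_of_real (Fx F R S p) / 2 + pdx (\<lambda>p. \<Theta> p - \<Omega> p) p)"
        by (rule gx[OF pU dTO(1)])
      finally have 1: "pdx (dminus \<epsilon> (Vmap \<delta> R S)) p = ?E * exp (\<Theta> p - \<Omega> p) * (- complex_of_real (Fx F R S p) / 2 + (pdx \<Theta> p - pdx \<Omega> p))"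
        using dTh dOm pU by simp
      have "pdy (dminus \<epsilon> (Vmap \<delta> R S)) p = pdy (\<lambda>p. exp (- Fc F (R p, S p) / 2) * exp (\<Theta> p - \<Omega> p)) p"
        by (rule pdy_eq_on[OF U_open pU]) (simp add: Vw)
      also have "\<dots> = ?E * exp (\<Theta> p - \<Omega> p) * (- complex_of_real (Fy F R S p) / 2 + pdy (\<lambda>p. \<Theta> p - \<Omega> p) p)"
        by (rule gy[OF pU dTO(1)])
      finally have 2: "pdy (dminus \<epsilon> (Vmap \<delta> R S)) p = ?E * exp (\<Theta> p - \<Omega> p) * (- complex_of_real (Fy F R S p) / 2 + (pdy \<Theta> p - pdy \<Omega> p))"
        using dTh dOm pU by simp
      show ?thesis unfolding dplus_def[of \<epsilon> "dminus \<epsilon> (Vmap \<delta> R S)"] 1 2 by (simp add: algebra_simps add_divide_distrib)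
    qed
    have L2: "dminus \<epsilon> (dplus \<epsilon> (Vmap \<delta> R S)) p
       = ?E * exp (\<Theta> p + \<Omega> p) * ((- complex_of_real (Fx F R S p) / 2 + (pdx \<Theta> p + pdx \<Omega> p))
            - (- complex_of_real (Fy F R S p) / 2 + (pdy \<Theta> p + pdy \<Omega> p)) / \<epsilon>) / 2"
    proof -
      have "pdx (dplus \<epsilon> (Vmap \<delta> R S)) p = pdx (\<lambda>p. exp (- Fc F (R p, S p) / 2) * exp (\<Theta> p + \<Omega> p)) p"
        by (rule pdx_eq_on[OF U_open pU]) (simp add: Vv)
      also have "\<dots> = ?E * exp (\<Theta> p + \<Omega> p) * (- complex_of_real (Fx F R S p) / 2 + pdx (\<lambda>p. \<Theta> p + \<Omega> p) p)"
        by (rule gx[OF pU dTO(2)])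
      finally have 1: "pdx (dplus \<epsilon> (Vmap \<delta> R S)) p = ?E * exp (\<Theta> p + \<Omega> p) * (- complex_of_real (Fx F R S p) / 2 + (pdx \<Theta> p + pdx \<Omega> p))"
        using dTh dOm pU by simp
      have "pdy (dplus \<epsilon> (Vmap \<delta> R S)) p = pdy (\<lambda>p. exp (- Fc F (R p, S p) / 2) * exp (\<Theta> p + \<Omega> p)) p"
        by (rule pdy_eq_on[OF U_open pU]) (simp add: Vv)
      also have "\<dots> = ?E * exp (\<Theta> p + \<Omega> p) * (- complex_of_real (Fy F R S p) / 2 + pdy (\<lambda>p. \<Theta> p + \<Omega> p) p)"
        by (rule gy[OF pU dTO(2)])
      finally have 2: "pdy (dplus \<epsilon> (Vmap \<delta> R S)) p = ?E * exp (\<Theta> p + \<Omega> p) * (- complex_of_real (Fy F R S p) / 2 + (pdy \<Theta> p + pdy \<Omega> p))"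
        using dTh dOm pU by simp
      show ?thesis unfolding dminus_def[of \<epsilon> "dplus \<epsilon> (Vmap \<delta> R S)"] 1 2 by (simp add: algebra_simps diff_divide_distrib)
    qed
    have sw: "dplus \<epsilon> (dminus \<epsilon> (Vmap \<delta> R S)) p = dminus \<epsilon> (dplus \<epsilon> (Vmap \<delta> R S)) p"
      by (rule dplus_dminus_swap[OF U_open pU dV dVx[OF pU] dVy[OF pU]])
    have hm: "dplus \<epsilon> (dminus \<epsilon> (Vmap \<delta> R S)) p + FV \<delta> F ?q * dplus \<epsilon> (Vmap \<delta> R S) p * dminus \<epsilon> (Vmap \<delta> R S) p = 0"
      using harm pU unfolding harmonic_map_def by blast
    have pv: "(complex_of_real (Fx F R S p) + complex_of_real (Fy F R S p)/\<epsilon>)/2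
        = FV \<delta> F ?q * (?E * exp (\<Theta> p + \<Omega> p)) + FW \<delta> F ?q * (?E * exp (- \<Theta> p - \<Omega> p))"
      unfolding FVq[OF uD[OF pU]] FWq[OF uD[OF pU]] Fx_def Fy_def of_real_add of_real_mult
        Rx[rule_format, OF pU] Ry[rule_format, OF pU] Sx[rule_format, OF pU] Sy[rule_format, OF pU]
      by (rule A_pv(1)[OF en dn])
    have pw: "(complex_of_real (Fx F R S p) - complex_of_real (Fy F R S p)/\<epsilon>)/2
        = FV \<delta> F ?q * (?E * exp (\<Theta> p - \<Omega> p)) + FW \<delta> F ?q * (?E * exp (\<Omega> p - \<Theta> p))"
      unfolding FVq[OF uD[OF pU]] FWq[OF uD[OF pU]] Fx_def Fy_def of_real_add of_real_mult
        Rx[rule_format, OF pU] Ry[rule_format, OF pU] Sx[rule_format, OF pU] Sy[rule_format, OF pU]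
      by (rule A_pv(2)[OF en dn])
    have e1: "?E * exp (\<Theta> p - \<Omega> p) * ((- complex_of_real (Fx F R S p) / 2 + (pdx \<Theta> p - pdx \<Omega> p))
            + (- complex_of_real (Fy F R S p) / 2 + (pdy \<Theta> p - pdy \<Omega> p)) / \<epsilon>) / 2
          + FV \<delta> F ?q * (?E * exp (\<Theta> p + \<Omega> p)) * (?E * exp (\<Theta> p - \<Omega> p)) = 0"
      using hm unfolding L1 Vv[OF pU] Vw[OF pU] .
    have e2: "?E * exp (\<Theta> p + \<Omega> p) * ((- complex_of_real (Fx F R S p) / 2 + (pdx \<Theta> p + pdx \<Omega> p))
            - (- complex_of_real (Fy F R S p) / 2 + (pdy \<Theta> p + pdy \<Omega> p)) / \<epsilon>) / 2
          + FV \<delta> F ?q * (?E * exp (\<Theta> p + \<Omega> p)) * (?E * exp (\<Theta> p - \<Omega> p)) = 0"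
      using hm unfolding sw L2 Vv[OF pU] Vw[OF pU] .
    show ?thesis
      using B_H1[OF exp_not_eq_zero exp_not_eq_zero en e1 pv] B_H2[OF exp_not_eq_zero exp_not_eq_zero en e2 pw]
      by simp
  qed

  show ?thesis
  proof (intro ballI conjI)
    fix p assume pU: "p \<in> U"
    let ?q = "(R p, S p)"
    let ?E = "exp (- Fc F (R p, S p) / 2)"
    have qD: "?q \<in> D" by (rule uD[OF pU])
    note H1 = conjunct1[OF H12[OF pU]] and H2 = conjunct2[OF H12[OF pU]]
    have cO: "cosh (\<Omega> p) \<noteq> 0" and sO: "sinh (\<Omega> p) \<noteq> 0" using Om_defined pU by auto
    note C = C34[OF en dn cO sO H1[unfolded FVq[OF qD] FWq[OF qD]] H2[unfolded FVq[OF qD] FWq[OF qD]]]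
    show "pdx \<Omega> p - pdy \<Theta> p / \<epsilon> = complex_of_real (Fx F R S p) / 2 * tanh (\<Omega> p)"
      unfolding Fx_def of_real_add of_real_mult Rx[rule_format, OF pU] Sx[rule_format, OF pU]
      by (rule C(1))
    show "pdy \<Omega> p - \<epsilon> * pdx \<Theta> p = complex_of_real (Fy F R S p) / 2 * (cosh (\<Omega> p) / sinh (\<Omega> p))"
      unfolding Fy_def of_real_add of_real_mult Ry[rule_format, OF pU] Sy[rule_format, OF pU]
      by (rule C(2))
    have dE: "(\<lambda>p. - Fc F (R p, S p)) differentiable at p"
      using dFc[OF qD] dR(1)[OF pU] dS(1)[OF pU] by simp
    have phw: "dminus \<epsilon> (\<lambda>p. Fc F (R p, S p)) p = FV \<delta> F ?q * (?E * exp (\<Theta> p - \<Omega> p)) + FW \<delta> F ?q * (?E * exp (\<Omega> p - \<Theta> p))"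
    proof -
      have "dminus \<epsilon> (\<lambda>p. Fc F (R p, S p)) p = (complex_of_real (Fx F R S p) - complex_of_real (Fy F R S p)/\<epsilon>)/2"
        unfolding dminus_def phix[OF pU] phiy[OF pU] ..
      also have "\<dots> = FV \<delta> F ?q * (?E * exp (\<Theta> p - \<Omega> p)) + FW \<delta> F ?q * (?E * exp (\<Omega> p - \<Theta> p))"
        unfolding FVq[OF qD] FWq[OF qD] Fx_def Fy_def of_real_add of_real_mult
          Rx[rule_format, OF pU] Ry[rule_format, OF pU] Sx[rule_format, OF pU] Sy[rule_format, OF pU]
        by (rule A_pv(2)[OF en dn])
      finally show ?thesis .
    qed
    have phv: "dplus \<epsilon> (\<lambda>p. Fc F (R p, S p)) p = FV \<delta> F ?q * (?E * exp (\<Theta> p + \<Omega> p)) + FW \<delta> F ?q * (?E * exp (- \<Theta> p - \<Omega> p))"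
    proof -
      have "dplus \<epsilon> (\<lambda>p. Fc F (R p, S p)) p = (complex_of_real (Fx F R S p) + complex_of_real (Fy F R S p)/\<epsilon>)/2"
        unfolding dplus_def phix[OF pU] phiy[OF pU] ..
      also have "\<dots> = FV \<delta> F ?q * (?E * exp (\<Theta> p + \<Omega> p)) + FW \<delta> F ?q * (?E * exp (- \<Theta> p - \<Omega> p))"
        unfolding FVq[OF qD] FWq[OF qD] Fx_def Fy_def of_real_add of_real_mult
          Rx[rule_format, OF pU] Ry[rule_format, OF pU] Sx[rule_format, OF pU] Sy[rule_format, OF pU]
        by (rule A_pv(1)[OF en dn])
      finally show ?thesis .
    qed
    have cW_FW: "dminus \<epsilon> (\<lambda>p. FW \<delta> F (R p, S p)) p = FVW \<delta> F ?q * (?E * exp (\<Theta> p - \<Omega> p)) + FWW \<delta> F ?q * (?E * exp (\<Omega> p - \<Theta> p))"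
    proof -
      have "dminus \<epsilon> (\<lambda>p. FW \<delta> F (R p, S p)) p = ((pdx (FW \<delta> F) ?q * complex_of_real (pdx R p) + pdy (FW \<delta> F) ?q * complex_of_real (pdx S p))
         - (pdx (FW \<delta> F) ?q * complex_of_real (pdy R p) + pdy (FW \<delta> F) ?q * complex_of_real (pdy S p)) / \<epsilon>) / 2"
        by (rule dplus_comp_chain(2)[OF dFW[OF qD] dR(1)[OF pU] dS(1)[OF pU]])
      also have "\<dots> = (pdx (FW \<delta> F) ?q + pdy (FW \<delta> F) ?q/\<delta>)/2 * (?E * exp (\<Theta> p - \<Omega> p)) + (pdx (FW \<delta> F) ?q - pdy (FW \<delta> F) ?q/\<delta>)/2 * (?E * exp (\<Omega> p - \<Theta> p))"
        unfolding Rx[rule_format, OF pU] Ry[rule_format, OF pU] Sx[rule_format, OF pU] Sy[rule_format, OF pU]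
        by (rule A_pv(2)[OF en dn])
      also have "\<dots> = FVW \<delta> F ?q * (?E * exp (\<Theta> p - \<Omega> p)) + FWW \<delta> F ?q * (?E * exp (\<Omega> p - \<Theta> p))"
        unfolding FVW_def FWW_def dplus_def[of \<delta> "FW \<delta> F"] dminus_def[of \<delta> "FW \<delta> F"] ..
      finally show ?thesis .
    qed
    have cV_FW: "dplus \<epsilon> (\<lambda>p. FW \<delta> F (R p, S p)) p = FVW \<delta> F ?q * (?E * exp (\<Theta> p + \<Omega> p)) + FWW \<delta> F ?q * (?E * exp (- \<Theta> p - \<Omega> p))"
    proof -
      have "dplus \<epsilon> (\<lambda>p. FW \<delta> F (R p, S p)) p = ((pdx (FW \<delta> F) ?q * complex_of_real (pdx R p) + pdy (FW \<delta> F) ?q * complex_of_real (pdx S p))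
         + (pdx (FW \<delta> F) ?q * complex_of_real (pdy R p) + pdy (FW \<delta> F) ?q * complex_of_real (pdy S p)) / \<epsilon>) / 2"
        by (rule dplus_comp_chain(1)[OF dFW[OF qD] dR(1)[OF pU] dS(1)[OF pU]])
      also have "\<dots> = (pdx (FW \<delta> F) ?q + pdy (FW \<delta> F) ?q/\<delta>)/2 * (?E * exp (\<Theta> p + \<Omega> p)) + (pdx (FW \<delta> F) ?q - pdy (FW \<delta> F) ?q/\<delta>)/2 * (?E * exp (- \<Theta> p - \<Omega> p))"
        unfolding Rx[rule_format, OF pU] Ry[rule_format, OF pU] Sx[rule_format, OF pU] Sy[rule_format, OF pU]
        by (rule A_pv(1)[OF en dn])
      also have "\<dots> = FVW \<delta> F ?q * (?E * exp (\<Theta> p + \<Omega> p)) + FWW \<delta> F ?q * (?E * exp (- \<Theta> p - \<Omega> p))"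
        unfolding FVW_def FWW_def dplus_def[of \<delta> "FW \<delta> F"] dminus_def[of \<delta> "FW \<delta> F"] ..
      finally show ?thesis .
    qed
    have cW_FV: "dminus \<epsilon> (\<lambda>p. FV \<delta> F (R p, S p)) p = FVV \<delta> F ?q * (?E * exp (\<Theta> p - \<Omega> p)) + FVW \<delta> F ?q * (?E * exp (\<Omega> p - \<Theta> p))"
    proof -
      have "dminus \<epsilon> (\<lambda>p. FV \<delta> F (R p, S p)) p = ((pdx (FV \<delta> F) ?q * complex_of_real (pdx R p) + pdy (FV \<delta> F) ?q * complex_of_real (pdx S p))
         - (pdx (FV \<delta> F) ?q * complex_of_real (pdy R p) + pdy (FV \<delta> F) ?q * complex_of_real (pdy S p)) / \<epsilon>) / 2"
        by (rule dplus_comp_chain(2)[OF dFV[OF qD] dR(1)[OF pU] dS(1)[OF pU]])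
      also have "\<dots> = (pdx (FV \<delta> F) ?q + pdy (FV \<delta> F) ?q/\<delta>)/2 * (?E * exp (\<Theta> p - \<Omega> p)) + (pdx (FV \<delta> F) ?q - pdy (FV \<delta> F) ?q/\<delta>)/2 * (?E * exp (\<Omega> p - \<Theta> p))"
        unfolding Rx[rule_format, OF pU] Ry[rule_format, OF pU] Sx[rule_format, OF pU] Sy[rule_format, OF pU]
        by (rule A_pv(2)[OF en dn])
      also have "\<dots> = FVV \<delta> F ?q * (?E * exp (\<Theta> p - \<Omega> p)) + dminus \<delta> (FV \<delta> F) ?q * (?E * exp (\<Omega> p - \<Theta> p))"
        unfolding FVV_def dplus_def[of \<delta> "FV \<delta> F"] dminus_def[of \<delta> "FV \<delta> F"] ..
      finally show ?thesis unfolding FVW_sym[OF qD] .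
    qed
    have cV_FV: "dplus \<epsilon> (\<lambda>p. FV \<delta> F (R p, S p)) p = FVV \<delta> F ?q * (?E * exp (\<Theta> p + \<Omega> p)) + FVW \<delta> F ?q * (?E * exp (- \<Theta> p - \<Omega> p))"
    proof -
      have "dplus \<epsilon> (\<lambda>p. FV \<delta> F (R p, S p)) p = ((pdx (FV \<delta> F) ?q * complex_of_real (pdx R p) + pdy (FV \<delta> F) ?q * complex_of_real (pdx S p))
         + (pdx (FV \<delta> F) ?q * complex_of_real (pdy R p) + pdy (FV \<delta> F) ?q * complex_of_real (pdy S p)) / \<epsilon>) / 2"
        by (rule dplus_comp_chain(1)[OF dFV[OF qD] dR(1)[OF pU] dS(1)[OF pU]])
      also have "\<dots> = (pdx (FV \<delta> F) ?q + pdy (FV \<delta> F) ?q/\<delta>)/2 * (?E * exp (\<Theta> p + \<Omega> p)) + (pdx (FV \<delta> F) ?q - pdy (FV \<delta> F) ?q/\<delta>)/2 * (?E * exp (- \<Theta> p - \<Omega> p))"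
        unfolding Rx[rule_format, OF pU] Ry[rule_format, OF pU] Sx[rule_format, OF pU] Sy[rule_format, OF pU]
        by (rule A_pv(1)[OF en dn])
      also have "\<dots> = FVV \<delta> F ?q * (?E * exp (\<Theta> p + \<Omega> p)) + dminus \<delta> (FV \<delta> F) ?q * (?E * exp (- \<Theta> p - \<Omega> p))"
        unfolding FVV_def dplus_def[of \<delta> "FV \<delta> F"] dminus_def[of \<delta> "FV \<delta> F"] ..
      finally show ?thesis unfolding FVW_sym[OF qD] .
    qed
    have dpTh: "dplus \<epsilon> \<Theta> differentiable at p" "dminus \<epsilon> \<Theta> differentiable at p"
      using dfa_dplus[OF dTh(2)[OF pU] dTh(3)[OF pU]] by simp_all
    have dpOm: "dplus \<epsilon> \<Omega> differentiable at p" "dminus \<epsilon> \<Omega> differentiable at p"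
      using dfa_dplus[OF dOm(2)[OF pU] dOm(3)[OF pU]] by simp_all
    define G1 where "G1 = (\<lambda>p. 1/2*exp (- Fc F (R p, S p) / 2)*(FW \<delta> F (R p, S p)*exp (-\<Theta> p - \<Omega> p) - FV \<delta> F (R p, S p)*exp (\<Theta> p + \<Omega> p)))"
    define G2 where "G2 = (\<lambda>p. 1/2*exp (- Fc F (R p, S p) / 2)*(FW \<delta> F (R p, S p)*exp (\<Omega> p - \<Theta> p) - FV \<delta> F (R p, S p)*exp (\<Theta> p - \<Omega> p)))"
    have Hv: "dplus \<epsilon> \<Theta> p - dplus \<epsilon> \<Omega> p = 1/2*?E*(FW \<delta> F ?q*exp (-\<Theta> p - \<Omega> p) - FV \<delta> F ?q*exp (\<Theta> p + \<Omega> p))"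
      using H1 unfolding dplus_def .
    have Hw: "dminus \<epsilon> \<Theta> p + dminus \<epsilon> \<Omega> p = 1/2*?E*(FW \<delta> F ?q*exp (\<Omega> p - \<Theta> p) - FV \<delta> F ?q*exp (\<Theta> p - \<Omega> p))"
      using H2 unfolding dminus_def .
    have T1: "dplus \<epsilon> (dminus \<epsilon> \<Theta>) p - dplus \<epsilon> (dminus \<epsilon> \<Omega>) p = dminus \<epsilon> G1 p"
    proof -
      have eqU: "dplus \<epsilon> \<Theta> q - dplus \<epsilon> \<Omega> q = G1 q" if "q \<in> U" for q
        using conjunct1[OF H12[OF that]] unfolding G1_def dplus_def by simp
      have "dminus \<epsilon> (\<lambda>q. dplus \<epsilon> \<Theta> q - dplus \<epsilon> \<Omega> q) p = dminus \<epsilon> G1 p"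
        by (rule dpm_eq_on(2)[OF U_open pU eqU])
      moreover have "dminus \<epsilon> (\<lambda>q. dplus \<epsilon> \<Theta> q - dplus \<epsilon> \<Omega> q) p = dminus \<epsilon> (dplus \<epsilon> \<Theta>) p - dminus \<epsilon> (dplus \<epsilon> \<Omega>) p"
        using dpTh dpOm by simp
      moreover have "dplus \<epsilon> (dminus \<epsilon> \<Theta>) p = dminus \<epsilon> (dplus \<epsilon> \<Theta>) p"
        by (rule dplus_dminus_swap[OF U_open pU dTh(1) dTh(2)[OF pU] dTh(3)[OF pU]])
      moreover have "dplus \<epsilon> (dminus \<epsilon> \<Omega>) p = dminus \<epsilon> (dplus \<epsilon> \<Omega>) p"
        by (rule dplus_dminus_swap[OF U_open pU dOm(1) dOm(2)[OF pU] dOm(3)[OF pU]])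
      ultimately show ?thesis by simp
    qed
    have T2: "dplus \<epsilon> (dminus \<epsilon> \<Theta>) p + dplus \<epsilon> (dminus \<epsilon> \<Omega>) p = dplus \<epsilon> G2 p"
    proof -
      have eqU: "dminus \<epsilon> \<Theta> q + dminus \<epsilon> \<Omega> q = G2 q" if "q \<in> U" for q
        using conjunct2[OF H12[OF that]] unfolding G2_def dminus_def by simp
      have "dplus \<epsilon> (\<lambda>q. dminus \<epsilon> \<Theta> q + dminus \<epsilon> \<Omega> q) p = dplus \<epsilon> G2 p"
        by (rule dpm_eq_on(1)[OF U_open pU eqU])
      moreover have "dplus \<epsilon> (\<lambda>q. dminus \<epsilon> \<Theta> q + dminus \<epsilon> \<Omega> q) p = dplus \<epsilon> (dminus \<epsilon> \<Theta>) p + dplus \<epsilon> (dminus \<epsilon> \<Omega>) p"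
        using dpTh dpOm by simp
      ultimately show ?thesis by simp
    qed
    have dG1: "dminus \<epsilon> G1 p = 1/2*(((?E)*(-((FV \<delta> F ?q)*((?E)*exp ((\<Theta> p)-(\<Omega> p))) + (FW \<delta> F ?q)*((?E)*exp ((\<Omega> p)-(\<Theta> p))))/2)) * ((FW \<delta> F ?q)*exp (-(\<Theta> p)-(\<Omega> p)) - (FV \<delta> F ?q)*exp ((\<Theta> p)+(\<Omega> p)))
        + (?E)*(((FVW \<delta> F ?q)*((?E)*exp ((\<Theta> p)-(\<Omega> p))) + (FWW \<delta> F ?q)*((?E)*exp ((\<Omega> p)-(\<Theta> p))))*exp (-(\<Theta> p)-(\<Omega> p)) + (FW \<delta> F ?q)*(exp (-(\<Theta> p)-(\<Omega> p))*(-((dminus \<epsilon> \<Theta> p) + (dminus \<epsilon> \<Omega> p))))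
        - (((FVV \<delta> F ?q)*((?E)*exp ((\<Theta> p)-(\<Omega> p))) + (FVW \<delta> F ?q)*((?E)*exp ((\<Omega> p)-(\<Theta> p))))*exp ((\<Theta> p)+(\<Omega> p)) + (FV \<delta> F ?q)*(exp ((\<Theta> p)+(\<Omega> p))*((dminus \<epsilon> \<Theta> p) + (dminus \<epsilon> \<Omega> p))))))"
      unfolding G1_def
      using dFc[OF qD] dFV[OF qD] dFW[OF qD] dR(1)[OF pU] dS(1)[OF pU] dTh(1)[OF pU] dOm(1)[OF pU]
      by (simp add: phw cW_FW cW_FV field_simps)
    have dG2: "dplus \<epsilon> G2 p = 1/2*(((?E)*(-((FV \<delta> F ?q)*((?E)*exp ((\<Theta> p)+(\<Omega> p))) + (FW \<delta> F ?q)*((?E)*exp (-(\<Theta> p)-(\<Omega> p))))/2)) * ((FW \<delta> F ?q)*exp ((\<Omega> p)-(\<Theta> p)) - (FV \<delta> F ?q)*exp ((\<Theta> p)-(\<Omega> p)))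
        + (?E)*(((FVW \<delta> F ?q)*((?E)*exp ((\<Theta> p)+(\<Omega> p))) + (FWW \<delta> F ?q)*((?E)*exp (-(\<Theta> p)-(\<Omega> p))))*exp ((\<Omega> p)-(\<Theta> p)) + (FW \<delta> F ?q)*(exp ((\<Omega> p)-(\<Theta> p))*(-((dplus \<epsilon> \<Theta> p) - (dplus \<epsilon> \<Omega> p))))
        - (((FVV \<delta> F ?q)*((?E)*exp ((\<Theta> p)+(\<Omega> p))) + (FVW \<delta> F ?q)*((?E)*exp (-(\<Theta> p)-(\<Omega> p))))*exp ((\<Theta> p)-(\<Omega> p)) + (FV \<delta> F ?q)*(exp ((\<Theta> p)-(\<Omega> p))*((dplus \<epsilon> \<Theta> p) - (dplus \<epsilon> \<Omega> p))))))"
      unfolding G2_def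
      using dFc[OF qD] dFV[OF qD] dFW[OF qD] dR(1)[OF pU] dS(1)[OF pU] dTh(1)[OF pU] dOm(1)[OF pU]
      by (simp add: phv cV_FW cV_FV field_simps)
    note DF = D_final[OF Hv Hw T1[unfolded dG1] T2[unfolded dG2]]
    have EE: "exp (- Fc F (R p, S p)) = ?E * ?E" by (simp add: exp_add[symmetric])
    show "2 * dplus \<epsilon> (dminus \<epsilon> \<Theta>) p = exp (- Fc F (R p, S p)) *
          (((FV \<delta> F (R p, S p))\<^sup>2 - FVV \<delta> F (R p, S p)) * exp (2 * \<Theta> p)
           - ((FW \<delta> F (R p, S p))\<^sup>2 - FWW \<delta> F (R p, S p)) * exp (- 2 * \<Theta> p))"
      unfolding EE by (rule DF(1))
    show "dplus \<epsilon> (dminus \<epsilon> \<Omega>) p = - (curvN \<delta> F (R p, S p) / 2) * sinh (2 * \<Omega> p)"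
      unfolding curvN_def EE by (rule DF(2))
  qed
qed

end
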